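(* Let $A$ be a self-adjoint operator on a separable Hilbert space $\mathfrak H$ with dense domain $D(A)$, and let $\lambda\in\mathrm{Spu}(A)$. Then $\mathrm{tr}\,\chi_{(-\infty,\lambda]}(A)=\mathrm{tr}\,\chi_{[\lambda,\infty)}(A)=+\infty$; equivalently, $\lambda\in\mathrm{Conv}(\hat\sigma_{\rm ess}(A))$.
   Context: $D(A)$ carries the graph norm. For a finite-dimensional subspace $V\subset D(A)$, $A_{|V}$ denotes the restriction of $P_VAP_V$ to $V$ ($P_V$ the orthogonal projector onto $V$). $\lambda\in\mathbb R$ is a spurious eigenvalue of $A$ ($\lambda\in\mathrm{Spu}(A)$) if there are finite-dimensional subspaces $V_n\subset D(A)$, $V_n\subset V_{n+1}$, with $\bigcup_nV_n$ dense in $D(A)$ for the graph norm, $\mathrm{dist}(\lambda,\sigma(A_{|V_n}))\to0$, and $\lambda\notin\sigma(A)$. $\hat\sigma_{\rm ess}(A)$ denotes $\sigma_{\rm ess}(A)$ together with $-\infty$ (resp. $+\infty$) if $\sigma(A)$ is unbounded from below (resp. above); $\mathrm{Conv}$ denotes the convex hull in $[-\infty,+\infty]$. $\chi_I$ denotes the characteristic function of $I$ and $\chi_I(A)$ the spectral projector. *)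

theory Defs
  imports "HOL-Analysis.Analysis"
begin

text \<open>A complex Hilbert space is modelled as a real Banach space 'a (type class banach)
  together with a complex scalar multiplication sm extending the real one and a complex
  inner product ip (linear in the first, conjugate linear in the second argument)
  that induces the norm of 'a.\<close>

definition complex_hilbert :: "(complex \<Rightarrow> 'a::banach \<Rightarrow> 'a) \<Rightarrow> ('a \<Rightarrow> 'a \<Rightarrow> complex) \<Rightarrow> bool" where
  "complex_hilbert sm ip \<longleftrightarrow>
     (\<forall>x. sm 1 x = x) \<and>
     (\<forall>a b x. sm (a * b) x = sm a (sm b x)) \<and>
     (\<forall>a x y. sm a (x + y) = sm a x + sm a y) \<and>
     (\<forall>a b x. sm (a + b) x = sm a x + sm b x) \<and>
     (\<forall>r x. sm (complex_of_real r) x = r *\<^sub>R x) \<and>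
     (\<forall>x y z. ip (x + y) z = ip x z + ip y z) \<and>
     (\<forall>a x y. ip (sm a x) y = a * ip x y) \<and>
     (\<forall>x y. ip y x = cnj (ip x y)) \<and>
     (\<forall>x. norm x = sqrt (Re (ip x x)))"

definition hseparable :: "'a::topological_space itself \<Rightarrow> bool" where
  "hseparable _ \<longleftrightarrow> (\<exists>S::'a set. countable S \<and> closure S = UNIV)"

definition csubspace :: "(complex \<Rightarrow> 'a::real_vector \<Rightarrow> 'a) \<Rightarrow> 'a set \<Rightarrow> bool" where
  "csubspace sm V \<longleftrightarrow> 0 \<in> V \<and> (\<forall>x\<in>V. \<forall>y\<in>V. x + y \<in> V) \<and> (\<forall>a. \<forall>x\<in>V. sm a x \<in> V)"

definition cfin_dim :: "(complex \<Rightarrow> 'a::real_vector \<Rightarrow> 'a) \<Rightarrow> 'a set \<Rightarrow> bool" where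
  "cfin_dim sm V \<longleftrightarrow> (\<exists>S. finite S \<and> (\<forall>v\<in>V. \<exists>c. v = (\<Sum>s\<in>S. sm (c s) s)))"

definition clinear_on :: "(complex \<Rightarrow> 'a::real_vector \<Rightarrow> 'a) \<Rightarrow> 'a set \<Rightarrow> ('a \<Rightarrow> 'a) \<Rightarrow> bool" where
  "clinear_on sm D A \<longleftrightarrow> (\<forall>x\<in>D. \<forall>y\<in>D. A (x + y) = A x + A y) \<and> (\<forall>a. \<forall>x\<in>D. A (sm a x) = sm a (A x))"

text \<open>Densely defined self-adjoint operator with domain D: symmetric, and D(A^*) contained in D.\<close>
definition selfadjoint :: "(complex \<Rightarrow> 'a::banach \<Rightarrow> 'a) \<Rightarrow> ('a \<Rightarrow> 'a \<Rightarrow> complex) \<Rightarrow> 'a set \<Rightarrow> ('a \<Rightarrow> 'a) \<Rightarrow> bool" where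
  "selfadjoint sm ip D A \<longleftrightarrow>
     csubspace sm D \<and> clinear_on sm D A \<and> closure D = UNIV \<and>
     (\<forall>x\<in>D. \<forall>y\<in>D. ip (A x) y = ip x (A y)) \<and>
     (\<forall>y z. (\<forall>x\<in>D. ip (A x) y = ip x z) \<longrightarrow> y \<in> D)"

definition op_spectrum :: "(complex \<Rightarrow> 'a::banach \<Rightarrow> 'a) \<Rightarrow> 'a set \<Rightarrow> ('a \<Rightarrow> 'a) \<Rightarrow> complex set" where
  "op_spectrum sm D A = {z. \<not> (bij_betw (\<lambda>x. A x - sm z x) D UNIV \<and>
        (\<exists>C. \<forall>x\<in>D. norm x \<le> C * norm (A x - sm z x)))}"

definition real_spectrum :: "(complex \<Rightarrow> 'a::banach \<Rightarrow> 'a) \<Rightarrow> 'a set \<Rightarrow> ('a \<Rightarrow> 'a) \<Rightarrow> real set" where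
  "real_spectrum sm D A = {r. complex_of_real r \<in> op_spectrum sm D A}"

text \<open>Essential spectrum: spectrum minus the discrete spectrum (isolated eigenvalues of
  finite multiplicity).\<close>
definition ess_spectrum :: "(complex \<Rightarrow> 'a::banach \<Rightarrow> 'a) \<Rightarrow> 'a set \<Rightarrow> ('a \<Rightarrow> 'a) \<Rightarrow> complex set" where
  "ess_spectrum sm D A = {z \<in> op_spectrum sm D A.
     \<not> ((\<exists>e>0. \<forall>w\<in>op_spectrum sm D A. w \<noteq> z \<longrightarrow> e \<le> cmod (w - z)) \<and>
        (\<exists>x\<in>D. x \<noteq> 0 \<and> A x = sm z x) \<and>
        cfin_dim sm {x\<in>D. A x = sm z x})}"

definition ess_hat :: "(complex \<Rightarrow> 'a::banach \<Rightarrow> 'a) \<Rightarrow> 'a set \<Rightarrow> ('a \<Rightarrow> 'a) \<Rightarrow> ereal set" where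
  "ess_hat sm D A =
     ereal ` {r. complex_of_real r \<in> ess_spectrum sm D A}
     \<union> (if bdd_below (real_spectrum sm D A) then {} else {-\<infinity>})
     \<union> (if bdd_above (real_spectrum sm D A) then {} else {\<infinity>})"

definition ConvE :: "ereal set \<Rightarrow> ereal set" where
  "ConvE S = {x. \<exists>a\<in>S. \<exists>b\<in>S. a \<le> x \<and> x \<le> b}"

definition orthproj :: "('a::real_vector \<Rightarrow> 'a \<Rightarrow> complex) \<Rightarrow> 'a set \<Rightarrow> 'a \<Rightarrow> 'a" where
  "orthproj ip V y = (THE p. p \<in> V \<and> (\<forall>w\<in>V. ip (y - p) w = 0))"

text \<open>Spectrum of the compression A_{|V} = P_V A P_V restricted to V.\<close>
definition compr_spectrum :: "(complex \<Rightarrow> 'a::real_vector \<Rightarrow> 'a) \<Rightarrow> ('a \<Rightarrow> 'a \<Rightarrow> complex) \<Rightarrow> 'a set \<Rightarrow> ('a \<Rightarrow> 'a) \<Rightarrow> complex set" where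
  "compr_spectrum sm ip V A = {z. \<exists>v\<in>V. v \<noteq> 0 \<and> orthproj ip V (A (orthproj ip V v)) = sm z v}"

definition spurious :: "(complex \<Rightarrow> 'a::banach \<Rightarrow> 'a) \<Rightarrow> ('a \<Rightarrow> 'a \<Rightarrow> complex) \<Rightarrow> 'a set \<Rightarrow> ('a \<Rightarrow> 'a) \<Rightarrow> real set" where
  "spurious sm ip D A = {lam.
     (\<exists>V :: nat \<Rightarrow> 'a set.
        (\<forall>n. csubspace sm (V n) \<and> cfin_dim sm (V n) \<and> V n \<subseteq> D \<and> V n \<subseteq> V (Suc n)) \<and>
        (\<forall>x\<in>D. \<forall>e>0. \<exists>n. \<exists>v\<in>V n. norm (x - v) + norm (A x - A v) < e) \<and>
        (\<forall>e>0. \<forall>\<^sub>F n in sequentially. \<exists>z\<in>compr_spectrum sm ip (V n) A. cmod (z - complex_of_real lam) < e)) \<and>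
     complex_of_real lam \<notin> op_spectrum sm D A}"

end

theory Submission
  imports Defs
begin


locale hil =
  fixes sm :: "complex \<Rightarrow> 'a::banach \<Rightarrow> 'a" and ip :: "'a \<Rightarrow> 'a \<Rightarrow> complex"
  assumes H: "complex_hilbert sm ip"
begin

lemma sm_one[simp]: "sm 1 x = x" using H unfolding complex_hilbert_def by metis
lemma sm_mult: "sm (a * b) x = sm a (sm b x)" using H unfolding complex_hilbert_def by blast
lemma sm_add_right: "sm a (x + y) = sm a x + sm a y" using H unfolding complex_hilbert_def by blast
lemma sm_add_left: "sm (a + b) x = sm a x + sm b x" using H unfolding complex_hilbert_def by blast
lemma sm_real: "sm (complex_of_real r) x = r *\<^sub>R x" using H unfolding complex_hilbert_def by blast
lemma ip_add_left: "ip (x + y) z = ip x z + ip y z" using H unfolding complex_hilbert_def by blast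
lemma ip_sm_left: "ip (sm a x) y = a * ip x y" using H unfolding complex_hilbert_def by blast
lemma ip_conj: "ip y x = cnj (ip x y)" using H unfolding complex_hilbert_def by blast
lemma norm_ip: "norm x = sqrt (Re (ip x x))" using H unfolding complex_hilbert_def by blast

lemma ip_add_right: "ip z (x + y) = ip z x + ip z y"
  by (metis complex_cnj_add ip_add_left ip_conj)
lemma ip_sm_right: "ip x (sm a y) = cnj a * ip x y"
  by (metis complex_cnj_mult ip_conj ip_sm_left)
lemma ip_zero_left[simp]: "ip 0 y = 0"
  using ip_add_left[of 0 0 y] by simp
lemma ip_zero_right[simp]: "ip y 0 = 0"
  using ip_add_right[of y 0 0] by simp
lemma ip_minus_left: "ip (- x) y = - ip x y"
  using ip_add_left[of x "-x" y] by (simp add: add_eq_0_iff)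
lemma ip_minus_right: "ip y (- x) = - ip y x"
  using ip_add_right[of y x "-x"] by (simp add: add_eq_0_iff)
lemma ip_diff_left: "ip (x - z) y = ip x y - ip z y"
  using ip_add_left[of x "-z" y] ip_minus_left by simp
lemma ip_diff_right: "ip y (x - z) = ip y x - ip y z"
  using ip_add_right[of y x "-z"] ip_minus_right by simp
lemma ip_scaleR_left: "ip (r *\<^sub>R x) y = complex_of_real r * ip x y"
  by (metis ip_sm_left sm_real)
lemma ip_scaleR_right: "ip y (r *\<^sub>R x) = complex_of_real r * ip y x"
  by (metis complex_cnj_complex_of_real ip_sm_right sm_real)

lemma sm_zero[simp]: "sm 0 x = 0"
  using sm_real[of 0 x] by simp
lemma sm_zero_right[simp]: "sm a 0 = 0"
  using sm_add_right[of a 0 0] by simp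
lemma sm_minus_right: "sm a (- x) = - sm a x"
  using sm_add_right[of a x "-x"] by (simp add: add_eq_0_iff)
lemma sm_diff_right: "sm a (x - y) = sm a x - sm a y"
  using sm_add_right[of a x "-y"] sm_minus_right by simp
lemma sm_minus_left: "sm (- a) x = - sm a x"
  using sm_add_left[of a "-a" x] by (simp add: add_eq_0_iff)
lemma sm_diff_left: "sm (a - b) x = sm a x - sm b x"
  using sm_add_left[of a "-b" x] sm_minus_left by simp
lemma sm_scaleR_comm: "sm a (r *\<^sub>R x) = r *\<^sub>R sm a x"
  by (metis mult.commute sm_mult sm_real)

lemma Re_ip_self_nonneg: "Re (ip x x) \<ge> 0"
proof -
  have "sqrt (Re (ip x x)) \<ge> 0" using norm_ip[of x] by (metis norm_ge_zero)
  thus ?thesis by (metis real_sqrt_lt_0_iff not_le)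
qed

lemma ip_self: "ip x x = complex_of_real ((norm x)\<^sup>2)"
proof -
  have "Im (ip x x) = 0" using ip_conj[of x x] by (metis cnj.sel(2) equal_neg_zero)
  moreover have "Re (ip x x) = (norm x)\<^sup>2" using norm_ip[of x] Re_ip_self_nonneg by simp
  ultimately show ?thesis by (simp add: complex_eq_iff)
qed

lemma ip_self_zero_iff: "ip x x = 0 \<longleftrightarrow> x = 0"
  using ip_self by simp

lemma norm_sm: "norm (sm a x) = cmod a * norm x"
proof -
  have "complex_of_real ((norm (sm a x))\<^sup>2) = a * cnj a * complex_of_real ((norm x)\<^sup>2)"
    using ip_self ip_sm_left ip_sm_right by (metis mult.assoc)
  also have "\<dots> = complex_of_real ((cmod a * norm x)\<^sup>2)"
    by (simp add: complex_norm_square[symmetric] power_mult_distrib)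
  finally have "(norm (sm a x))\<^sup>2 = (cmod a * norm x)\<^sup>2" using of_real_eq_iff by blast
  thus ?thesis by (simp add: power2_eq_iff_nonneg)
qed

lemma norm_add_sq: "(norm (x + y))\<^sup>2 = (norm x)\<^sup>2 + 2 * Re (ip x y) + (norm y)\<^sup>2"
proof -
  have "ip (x+y) (x+y) = ip x x + ip x y + ip y x + ip y y"
    by (simp add: ip_add_left ip_add_right)
  hence "complex_of_real ((norm (x + y))\<^sup>2) = ip x x + ip x y + ip y x + ip y y"
    by (simp only: ip_self)
  hence "(norm (x + y))\<^sup>2 = Re (ip x x + ip x y + ip y x + ip y y)"
    by (metis Re_complex_of_real)
  thus ?thesis using ip_conj[of x y] by (simp add: ip_self)
qed

lemma norm_diff_sq: "(norm (x - y))\<^sup>2 = (norm x)\<^sup>2 - 2 * Re (ip x y) + (norm y)\<^sup>2"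
  using norm_add_sq[of x "-y"] by (simp add: ip_minus_right)

lemma cauchy_schwarz: "cmod (ip x y) \<le> norm x * norm y"
proof (cases "y = 0")
  case True thus ?thesis by simp
next
  case False
  have aux: "complex_of_real (cmod z) * complex_of_real (cmod z) = z * cnj z" for z
    by (metis complex_norm_square of_real_mult power2_eq_square)
  define n where "n = (norm y)\<^sup>2"
  have n: "n > 0" using False n_def by simp
  define p where "p = ip x y"
  define c where "c = p / complex_of_real n"
  have "ip (x - sm c y) (x - sm c y) = ip x x - cnj c * p - c * ip y x + c * cnj c * ip y y"
    by (simp add: ip_diff_left ip_diff_right ip_sm_left ip_sm_right p_def algebra_simps)
  also have "\<dots> = complex_of_real ((norm x)\<^sup>2 - (cmod p)\<^sup>2 / n)"
    using n ip_conj[of x y] unfolding c_def ip_self n_def[symmetric] p_def[symmetric]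
    by (simp add: field_simps power2_eq_square aux)
  finally have "(norm (x - sm c y))\<^sup>2 = (norm x)\<^sup>2 - (cmod p)\<^sup>2 / n"
    using ip_self by (metis of_real_eq_iff)
  hence "(cmod p)\<^sup>2 / n \<le> (norm x)\<^sup>2" by (metis diff_ge_0_iff_ge zero_le_power2)
  hence "(cmod p)\<^sup>2 \<le> (norm x * norm y)\<^sup>2" using n unfolding n_def
    by (simp add: pos_divide_le_eq power_mult_distrib)
  thus ?thesis unfolding p_def by (meson norm_ge_zero power2_le_imp_le mult_nonneg_nonneg)
qed

lemma bl_ip_left: "bounded_linear (\<lambda>x. ip x y)"
proof (rule bounded_linear_intro[where K="norm y"])
  show "\<And>x1 x2. ip (x1 + x2) y = ip x1 y + ip x2 y" by (rule ip_add_left)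
  show "\<And>r x. ip (r *\<^sub>R x) y = r *\<^sub>R ip x y" by (simp add: ip_scaleR_left scaleR_conv_of_real)
  show "\<And>x. norm (ip x y) \<le> norm x * norm y" by (rule cauchy_schwarz)
qed

lemma bl_ip_right: "bounded_linear (\<lambda>y. ip x y)"
proof (rule bounded_linear_intro[where K="norm x"])
  show "\<And>x1 x2. ip x (x1 + x2) = ip x x1 + ip x x2" by (rule ip_add_right)
  show "\<And>r y. ip x (r *\<^sub>R y) = r *\<^sub>R ip x y" by (simp add: ip_scaleR_right scaleR_conv_of_real)
  show "\<And>y. norm (ip x y) \<le> norm y * norm x" using cauchy_schwarz by (metis mult.commute)
qed

lemma bl_sm: "bounded_linear (sm a)"
proof (rule bounded_linear_intro[where K="cmod a"])
  show "\<And>x1 x2. sm a (x1 + x2) = sm a x1 + sm a x2" by (rule sm_add_right)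
  show "\<And>r x. sm a (r *\<^sub>R x) = r *\<^sub>R sm a x" by (rule sm_scaleR_comm)
  show "\<And>x. norm (sm a x) \<le> norm x * cmod a" by (simp add: norm_sm mult.commute)
qed

lemma ip_sum_left: "ip (\<Sum>s\<in>S. f s) y = (\<Sum>s\<in>S. ip (f s) y)"
  using linear_sum[OF bounded_linear.linear[OF bl_ip_left]] by blast
lemma ip_sum_right: "ip y (\<Sum>s\<in>S. f s) = (\<Sum>s\<in>S. ip y (f s))"
  using linear_sum[OF bounded_linear.linear[OF bl_ip_right]] by blast
lemma sm_sum: "sm a (\<Sum>s\<in>S. f s) = (\<Sum>s\<in>S. sm a (f s))"
  using linear_sum[OF bounded_linear.linear[OF bl_sm]] by blast

lemma ip_zero_all: "(\<And>y. ip x y = 0) \<Longrightarrow> x = 0"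
  using ip_self_zero_iff by blast

end


context hil begin

definition cspan :: "'a set \<Rightarrow> 'a set" where
  "cspan S = {v. \<exists>c. v = (\<Sum>s\<in>S. sm (c s) s)}"

definition ons :: "'a set \<Rightarrow> bool" where
  "ons Bs \<longleftrightarrow> (\<forall>b\<in>Bs. ip b b = 1) \<and> (\<forall>b\<in>Bs. \<forall>b'\<in>Bs. b \<noteq> b' \<longrightarrow> ip b b' = 0)"

lemma csub_zero: "csubspace sm V \<Longrightarrow> 0 \<in> V" unfolding csubspace_def by blast
lemma csub_add: "csubspace sm V \<Longrightarrow> x \<in> V \<Longrightarrow> y \<in> V \<Longrightarrow> x + y \<in> V" unfolding csubspace_def by blast
lemma csub_sm: "csubspace sm V \<Longrightarrow> x \<in> V \<Longrightarrow> sm a x \<in> V" unfolding csubspace_def by blast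
lemma csub_minus: "csubspace sm V \<Longrightarrow> x \<in> V \<Longrightarrow> - x \<in> V"
  using csub_sm[of V x "-1"] by (simp add: sm_minus_left)
lemma csub_diff: "csubspace sm V \<Longrightarrow> x \<in> V \<Longrightarrow> y \<in> V \<Longrightarrow> x - y \<in> V"
  using csub_add[of V x "-y"] csub_minus by simp
lemma csub_scaleR: "csubspace sm V \<Longrightarrow> x \<in> V \<Longrightarrow> r *\<^sub>R x \<in> V"
  using csub_sm[of V x "complex_of_real r"] by (simp add: sm_real)
lemma csub_sum: "csubspace sm V \<Longrightarrow> (\<And>s. s \<in> S \<Longrightarrow> f s \<in> V) \<Longrightarrow> (\<Sum>s\<in>S. f s) \<in> V"
proof (induction S rule: infinite_finite_induct)
  case (infinite A) thus ?case by (simp add: csub_zero)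
next
  case empty thus ?case by (simp add: csub_zero)
next
  case (insert x F) thus ?case by (simp add: csub_add)
qed
lemma csub_inter: "csubspace sm V \<Longrightarrow> csubspace sm W \<Longrightarrow> csubspace sm (V \<inter> W)"
  unfolding csubspace_def by blast

lemma cspan_csub: "csubspace sm (cspan S)"
  unfolding csubspace_def cspan_def
proof (intro conjI ballI allI)
  show "0 \<in> {v. \<exists>c. v = (\<Sum>s\<in>S. sm (c s) s)}" by (rule CollectI, rule exI[of _ "\<lambda>_. 0"]) simp
next
  fix x y assume "x \<in> {v. \<exists>c. v = (\<Sum>s\<in>S. sm (c s) s)}" "y \<in> {v. \<exists>c. v = (\<Sum>s\<in>S. sm (c s) s)}"
  then obtain c d where "x = (\<Sum>s\<in>S. sm (c s) s)" "y = (\<Sum>s\<in>S. sm (d s) s)" by blast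
  hence "x + y = (\<Sum>s\<in>S. sm ((\<lambda>s. c s + d s) s) s)" by (simp add: sm_add_left sum.distrib)
  thus "x + y \<in> {v. \<exists>c. v = (\<Sum>s\<in>S. sm (c s) s)}" by (auto intro!: exI[of _ "\<lambda>s. c s + d s"])
next
  fix a x assume "x \<in> {v. \<exists>c. v = (\<Sum>s\<in>S. sm (c s) s)}"
  then obtain c where "x = (\<Sum>s\<in>S. sm (c s) s)" by blast
  hence "sm a x = (\<Sum>s\<in>S. sm ((\<lambda>s. a * c s) s) s)" by (simp add: sm_sum sm_mult)
  thus "sm a x \<in> {v. \<exists>c. v = (\<Sum>s\<in>S. sm (c s) s)}" by (auto intro!: exI[of _ "\<lambda>s. a * c s"])
qed

lemma in_cspan: assumes "finite S" "s \<in> S" shows "s \<in> cspan S"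
proof -
  have "(\<Sum>t\<in>S. sm (if t = s then 1 else 0) t) = (\<Sum>t\<in>S. if t = s then t else 0)"
    by (rule sum.cong) auto
  also have "\<dots> = s" using assms by (simp add: sum.delta')
  finally have "(\<Sum>t\<in>S. sm ((\<lambda>t. if t = s then 1 else 0) t) t) = s" by simp
  thus ?thesis unfolding cspan_def by (auto intro!: exI[of _ "\<lambda>t. if t = s then 1 else 0"])
qed

lemma cspan_sub: assumes "csubspace sm V" "S \<subseteq> V" shows "cspan S \<subseteq> V"
proof
  fix v assume "v \<in> cspan S"
  then obtain c where "v = (\<Sum>s\<in>S. sm (c s) s)" unfolding cspan_def by blast
  have "sm (c s) s \<in> V" if "s \<in> S" for s using assms that csub_sm by blast
  thus "v \<in> V" using csub_sum[OF assms(1), of S "\<lambda>s. sm (c s) s"] \<open>v = _\<close> by simp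
qed

lemma cfin_dim_iff: "cfin_dim sm V \<longleftrightarrow> (\<exists>S. finite S \<and> V \<subseteq> cspan S)"
  unfolding cfin_dim_def cspan_def by (simp only: subset_eq mem_Collect_eq)

lemma ip_ons_left: assumes "ons Bs" "finite Bs" "b' \<in> Bs"
  shows "ip (\<Sum>b\<in>Bs. sm (c b) b) b' = c b'"
proof -
  have "ip (\<Sum>b\<in>Bs. sm (c b) b) b' = (\<Sum>b\<in>Bs. c b * ip b b')" by (simp add: ip_sum_left ip_sm_left)
  also have "\<dots> = (\<Sum>b\<in>Bs. if b = b' then c b' else 0)"
    using assms unfolding ons_def by (intro sum.cong) auto
  also have "\<dots> = c b'" using assms by (simp add: sum.delta')
  finally show ?thesis .
qed

lemma ip_ons_right: assumes "ons Bs" "finite Bs" "b' \<in> Bs"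
  shows "ip b' (\<Sum>b\<in>Bs. sm (c b) b) = cnj (c b')"
  using ip_ons_left[OF assms, of c] ip_conj by metis

lemma ip_ons_sums: assumes "ons Bs" "finite Bs"
  shows "ip (\<Sum>b\<in>Bs. sm (c b) b) (\<Sum>b\<in>Bs. sm (d b) b) = (\<Sum>b\<in>Bs. c b * cnj (d b))"
proof -
  have "ip (\<Sum>b\<in>Bs. sm (c b) b) (\<Sum>b\<in>Bs. sm (d b) b) = (\<Sum>b\<in>Bs. c b * ip b (\<Sum>b\<in>Bs. sm (d b) b))"
    by (simp add: ip_sum_left ip_sm_left)
  also have "\<dots> = (\<Sum>b\<in>Bs. c b * cnj (d b))" using ip_ons_right[OF assms] by simp
  finally show ?thesis .
qed

lemma norm_ons_sum: assumes "ons Bs" "finite Bs"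
  shows "(norm (\<Sum>b\<in>Bs. sm (c b) b))\<^sup>2 = (\<Sum>b\<in>Bs. (cmod (c b))\<^sup>2)"
proof -
  have "complex_of_real ((norm (\<Sum>b\<in>Bs. sm (c b) b))\<^sup>2) = (\<Sum>b\<in>Bs. c b * cnj (c b))"
    using ip_ons_sums[OF assms, of c c] ip_self by metis
  also have "\<dots> = complex_of_real (\<Sum>b\<in>Bs. (cmod (c b))\<^sup>2)"
    unfolding of_real_sum by (rule sum.cong) (simp_all only: complex_norm_square)
  finally show ?thesis using of_real_eq_iff by blast
qed

definition pr :: "'a set \<Rightarrow> 'a \<Rightarrow> 'a" where
  "pr Bs y = (\<Sum>b\<in>Bs. sm (ip y b) b)"

lemma pr_orth: assumes "ons Bs" "finite Bs" "b' \<in> Bs" shows "ip (y - pr Bs y) b' = 0"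
  using ip_ons_left[OF assms, of "\<lambda>b. ip y b"] unfolding pr_def by (simp add: ip_diff_left)

lemma pr_orth_span: assumes "ons Bs" "finite Bs" "w \<in> cspan Bs" shows "ip (y - pr Bs y) w = 0"
proof -
  obtain c where "w = (\<Sum>b\<in>Bs. sm (c b) b)" using assms unfolding cspan_def by blast
  thus ?thesis using pr_orth[OF assms(1,2)] by (simp add: ip_sum_right ip_sm_right)
qed

lemma pr_in: "pr Bs y \<in> cspan Bs" unfolding pr_def cspan_def by blast

lemma pr_id: assumes "ons Bs" "finite Bs" "y \<in> cspan Bs" shows "pr Bs y = y"
proof -
  obtain c where c: "y = (\<Sum>b\<in>Bs. sm (c b) b)" using assms unfolding cspan_def by blast
  have "ip y b = c b" if "b \<in> Bs" for b using ip_ons_left[OF assms(1,2) that] c by simp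
  hence "pr Bs y = (\<Sum>b\<in>Bs. sm (c b) b)" unfolding pr_def by (intro sum.cong) simp_all
  thus ?thesis using c by simp
qed

lemma fd_aux:
  assumes "finite S"
  shows "csubspace sm V \<Longrightarrow> V \<subseteq> cspan S \<Longrightarrow> \<exists>Bs. finite Bs \<and> ons Bs \<and> Bs \<subseteq> V \<and> V = cspan Bs"
  using assms
proof (induction S arbitrary: V rule: finite_induct)
  case empty
  have "cspan {} = {0}" unfolding cspan_def by simp
  hence "V = {0}" using empty csub_zero by blast
  thus ?case by (intro exI[of _ "{}"]) (auto simp: ons_def \<open>cspan {} = {0}\<close>)
next
  case (insert s S' V)
  define V' where "V' = V \<inter> cspan S'"
  have "csubspace sm V'" unfolding V'_def by (rule csub_inter[OF insert.prems(1) cspan_csub])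
  then obtain Bs' where Bs': "finite Bs'" "ons Bs'" "Bs' \<subseteq> V'" "V' = cspan Bs'"
    using insert.IH[of V'] V'_def by blast
  show ?case
  proof (cases "V \<subseteq> cspan S'")
    case True
    hence "V' = V" unfolding V'_def by blast
    thus ?thesis using Bs' by auto
  next
    case False
    then obtain u where u: "u \<in> V" "u \<notin> cspan S'" by blast
    obtain c where c: "u = (\<Sum>t\<in>insert s S'. sm (c t) t)" using u insert.prems(2) unfolding cspan_def by blast
    hence c2: "u = sm (c s) s + (\<Sum>t\<in>S'. sm (c t) t)" using insert.hyps by simp
    have cs: "c s \<noteq> 0"
    proof
      assume "c s = 0"
      hence "u = (\<Sum>t\<in>S'. sm (c t) t)" using c2 by simp
      thus False using u unfolding cspan_def by blast
    qed
    define u' where "u' = u - pr Bs' u"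
    have Bs'V: "Bs' \<subseteq> V" using Bs' V'_def by blast
    have prV: "pr Bs' u \<in> V" unfolding pr_def
      by (rule csub_sum[OF insert.prems(1)]) (use Bs'V csub_sm[OF insert.prems(1)] in blast)
    have u'V: "u' \<in> V" unfolding u'_def by (rule csub_diff[OF insert.prems(1) u(1) prV])
    have u'nz: "u' \<noteq> 0"
    proof
      assume "u' = 0"
      hence "u = pr Bs' u" unfolding u'_def by simp
      hence "u \<in> V'" using Bs'(4) pr_in[of Bs' u] by simp
      thus False using u V'_def by blast
    qed
    define on where "on = sm (complex_of_real (1 / norm u')) u'"
    have on_norm: "norm on = 1" unfolding on_def using u'nz by (simp add: norm_sm norm_divide)
    have on_orth: "ip on b = 0" if "b \<in> Bs'" for b
      unfolding on_def u'_def using pr_orth[OF Bs'(2,1) that] by (simp add: ip_sm_left)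
    have on_self: "ip on on = 1" using ip_self on_norm by simp
    have on_notin: "on \<notin> Bs'" using on_orth on_self by force
    define Bs where "Bs = insert on Bs'"
    have onsO: "ons Bs" unfolding Bs_def ons_def
    proof (intro conjI ballI impI)
      fix b assume "b \<in> insert on Bs'" thus "ip b b = 1" using on_self Bs'(2) unfolding ons_def by blast
    next
      fix b b' assume "b \<in> insert on Bs'" "b' \<in> insert on Bs'" "b \<noteq> b'"
      thus "ip b b' = 0"
      proof (elim insertE)
        assume "b = on" "b' = on" thus ?thesis using \<open>b \<noteq> b'\<close> by simp
      next
        assume "b = on" "b' \<in> Bs'" thus ?thesis using on_orth by simp
      next
        assume "b \<in> Bs'" "b' = on" thus ?thesis using on_orth[of b] ip_conj[of on b] by simp
      next
        assume "b \<in> Bs'" "b' \<in> Bs'" thus ?thesis using Bs'(2) \<open>b \<noteq> b'\<close> unfolding ons_def by blast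
      qed
    qed
    have onV: "on \<in> V" unfolding on_def by (rule csub_sm[OF insert.prems(1) u'V])
    have OV: "Bs \<subseteq> V" unfolding Bs_def using onV Bs'V by blast
    have fO: "finite Bs" unfolding Bs_def using Bs'(1) by simp
    have cO: "csubspace sm (cspan Bs)" by (rule cspan_csub)
    have OcO: "Bs \<subseteq> cspan Bs" using in_cspan[OF fO] by blast
    have "V \<subseteq> cspan Bs"
    proof
      fix v assume v: "v \<in> V"
      obtain d where d: "v = (\<Sum>t\<in>insert s S'. sm (d t) t)" using v insert.prems(2) unfolding cspan_def by blast
      hence d2: "v = sm (d s) s + (\<Sum>t\<in>S'. sm (d t) t)" using insert.hyps by simp
      define k where "k = d s / c s"
      have "v - sm k u = (\<Sum>t\<in>S'. sm (d t) t) - (\<Sum>t\<in>S'. sm (k * c t) t)"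
        using d2 c2 cs unfolding k_def by (simp add: sm_add_right sm_sum sm_mult[symmetric])
      also have "\<dots> = (\<Sum>t\<in>S'. sm (d t - k * c t) t)" by (simp add: sm_diff_left sum_subtractf)
      finally have "v - sm k u \<in> cspan S'" unfolding cspan_def by (auto intro!: exI[of _ "\<lambda>t. d t - k * c t"])
      moreover have "v - sm k u \<in> V" using v u csub_diff csub_sm insert.prems(1) by blast
      ultimately have w: "v - sm k u \<in> cspan Bs'" using Bs'(4) V'_def by blast
      have "cspan Bs' \<subseteq> cspan Bs" by (rule cspan_sub[OF cO]) (use OcO Bs_def in blast)
      hence w2: "v - sm k u \<in> cspan Bs" using w by blast
      have prO: "pr Bs' u \<in> cspan Bs" using pr_in \<open>cspan Bs' \<subseteq> cspan Bs\<close> by blast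
      have "u' = sm (complex_of_real (norm u')) on" unfolding on_def using u'nz
        by (simp add: sm_mult[symmetric])
      moreover have "on \<in> cspan Bs" using OcO Bs_def by blast
      ultimately have u'Bs: "u' \<in> cspan Bs" using csub_sm[OF cO, of on "complex_of_real (norm u')"] by simp
      have "u \<in> cspan Bs" using csub_add[OF cO u'Bs prO] unfolding u'_def by simp
      hence "sm k u \<in> cspan Bs" using csub_sm[OF cO] by blast
      thus "v \<in> cspan Bs" using csub_add[OF cO w2] by force
    qed
    moreover have "cspan Bs \<subseteq> V" by (rule cspan_sub[OF insert.prems(1) OV])
    ultimately show ?thesis using fO onsO OV by blast
  qed
qed

lemma fd_basis: assumes "csubspace sm V" "cfin_dim sm V"
  shows "\<exists>Bs. finite Bs \<and> ons Bs \<and> Bs \<subseteq> V \<and> V = cspan Bs"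
proof -
  obtain S where "finite S" "V \<subseteq> cspan S" using assms(2) cfin_dim_iff by blast
  thus ?thesis using fd_aux assms(1) by blast
qed

lemma proj_unique: assumes "csubspace sm V" "p \<in> V" "q \<in> V"
  "\<forall>w\<in>V. ip (y - p) w = 0" "\<forall>w\<in>V. ip (y - q) w = 0" shows "p = q"
proof -
  have "p - q \<in> V" using assms csub_diff by blast
  have e: "p - q = (y - q) - (y - p)" by simp
  have "ip (p - q) (p - q) = ip (y - q) (p - q) - ip (y - p) (p - q)"
    by (subst e, rule ip_diff_left)
  hence "ip (p - q) (p - q) = 0" using assms(4,5) \<open>p - q \<in> V\<close> by simp
  thus ?thesis using ip_self_zero_iff by simp
qed

lemma orthproj_eq: assumes "csubspace sm V" "p \<in> V" "\<forall>w\<in>V. ip (y - p) w = 0"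
  shows "orthproj ip V y = p"
  unfolding orthproj_def
  by (rule the_equality) (use assms proj_unique in blast)+

lemma orthproj_fd: assumes "csubspace sm V" "cfin_dim sm V"
  shows "orthproj ip V y \<in> V \<and> (\<forall>w\<in>V. ip (y - orthproj ip V y) w = 0)"
proof -
  obtain Bs where Bs: "finite Bs" "ons Bs" "Bs \<subseteq> V" "V = cspan Bs" using fd_basis[OF assms] by blast
  have "pr Bs y \<in> V" using pr_in Bs(4) by simp
  moreover have "\<forall>w\<in>V. ip (y - pr Bs y) w = 0" using pr_orth_span[OF Bs(2,1)] Bs(4) by simp
  ultimately show ?thesis using orthproj_eq[OF assms(1)] by simp
qed

lemma orthproj_self: assumes "csubspace sm V" "v \<in> V" shows "orthproj ip V v = v"
  using orthproj_eq[OF assms] by simp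

end


context hil begin

lemma parallelogram: fixes a b :: 'a shows "(norm (a + b))\<^sup>2 + (norm (a - b))\<^sup>2 = 2 * (norm a)\<^sup>2 + 2 * (norm b)\<^sup>2"
  using norm_add_sq[of a b] norm_diff_sq[of a b] by simp

lemma proj_closed:
  assumes W: "csubspace sm W" "closed W"
  shows "\<exists>p\<in>W. \<forall>w\<in>W. ip (y - p) w = 0"
proof -
  define d where "d = Inf ((\<lambda>w. norm (y - w)) ` W)"
  have ne: "(\<lambda>w. norm (y - w)) ` W \<noteq> {}" using csub_zero[OF W(1)] by blast
  have bdd: "bdd_below ((\<lambda>w. norm (y - w)) ` W)" by (rule bdd_belowI[of _ 0]) auto
  have dle: "d \<le> norm (y - w)" if "w \<in> W" for w
    unfolding d_def using that bdd by (simp add: cInf_lower)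
  have d0: "d \<ge> 0" unfolding d_def by (rule cInf_greatest[OF ne]) auto
  have ex: "\<exists>w. w \<in> W \<and> norm (y - w) < d + inverse (real (Suc n))" for n
  proof -
    have "d < d + inverse (real (Suc n))" by simp
    then obtain v where "v \<in> (\<lambda>w. norm (y - w)) ` W" "v < d + inverse (real (Suc n))"
      using cInf_lessD[OF ne] unfolding d_def by blast
    thus ?thesis by blast
  qed
  have "\<forall>n. \<exists>w. w \<in> W \<and> norm (y - w) < d + inverse (real (Suc n))" using ex by blast
  from choice[OF this] obtain w where w0: "\<forall>n. w n \<in> W \<and> norm (y - w n) < d + inverse (real (Suc n))"
    by blast
  have w: "\<And>n. w n \<in> W" "\<And>n. norm (y - w n) < d + inverse (real (Suc n))" using w0 by auto
  define i where "i n = inverse (real (Suc n))" for n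
  define K where "K = 2 * d + 1"
  have i0: "0 < i n" "i n \<le> 1" for n unfolding i_def by (auto simp: field_simps)
  have imono: "i n \<le> i m" if "m \<le> n" for m n unfolding i_def using that
    by (simp add: le_imp_inverse_le)
  have sq: "(norm (y - w n))\<^sup>2 \<le> d\<^sup>2 + K * i n" for n
  proof -
    have "(norm (y - w n))\<^sup>2 \<le> (d + i n)\<^sup>2" using w(2)[of n] unfolding i_def
      by (intro power_mono) auto
    also have "\<dots> = d\<^sup>2 + 2 * d * i n + i n * i n" by (simp add: power2_eq_square algebra_simps)
    also have "\<dots> \<le> d\<^sup>2 + K * i n" unfolding K_def using i0[of n] d0
      by (simp add: algebra_simps mult_left_le)
    finally show ?thesis .
  qed
  have cd: "(norm (w m - w n))\<^sup>2 \<le> 2 * K * (i n + i m)" for m n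
  proof -
    define a where "a = y - w n"
    define b where "b = y - w m"
    define mid where "mid = (1/2) *\<^sub>R (w n + w m)"
    have midW: "mid \<in> W" unfolding mid_def using csub_scaleR[OF W(1)] csub_add[OF W(1) w(1) w(1)] by blast
    have "a + b = 2 *\<^sub>R (y - mid)" unfolding a_def b_def mid_def by (simp add: algebra_simps scaleR_2)
    hence "norm (a + b) = 2 * norm (y - mid)" by simp
    hence "(norm (a + b))\<^sup>2 \<ge> 4 * d\<^sup>2" using dle[OF midW] d0
      by (simp add: power2_eq_square mult_mono)
    moreover have "a - b = w m - w n" unfolding a_def b_def by simp
    ultimately show ?thesis using parallelogram[of a b] sq[of n] sq[of m] unfolding a_def b_def
      by (simp add: algebra_simps)
  qed
  have K0: "K > 0" unfolding K_def using d0 by simp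
  have "Cauchy w"
  proof (rule metric_CauchyI)
    fix e :: real assume e: "e > 0"
    have "e\<^sup>2 / (4 * K) > 0" using e K0 by simp
    then obtain N where N: "inverse (real (Suc N)) < e\<^sup>2 / (4 * K)" using reals_Archimedean by blast
    show "\<exists>M. \<forall>m\<ge>M. \<forall>n\<ge>M. dist (w m) (w n) < e"
    proof (intro exI allI impI)
      fix m n assume mn: "N \<le> m" "N \<le> n"
      have "(norm (w m - w n))\<^sup>2 \<le> 2 * K * (i n + i m)" by (rule cd)
      also have "\<dots> \<le> 2 * K * (i N + i N)" using imono mn K0 by (intro mult_left_mono add_mono) auto
      also have "\<dots> < e\<^sup>2" using N K0 unfolding i_def by (simp add: field_simps)
      finally have "(norm (w m - w n))\<^sup>2 < e\<^sup>2" .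
      hence "norm (w m - w n) < e" using e by (simp add: power_less_imp_less_base)
      thus "dist (w m) (w n) < e" by (simp add: dist_norm)
    qed
  qed
  then obtain p where p: "w \<longlonglongrightarrow> p" using Cauchy_convergent convergent_def by blast
  have pW: "p \<in> W" using closed_sequentially[OF W(2) _ p] w(1) by blast
  have "(\<lambda>n. norm (y - w n)) \<longlonglongrightarrow> norm (y - p)" by (intro tendsto_intros p)
  moreover have "(\<lambda>n. d + inverse (real (Suc n))) \<longlonglongrightarrow> d" by (rule LIMSEQ_inverse_real_of_nat_add)
  ultimately have "norm (y - p) \<le> d" using w(2) by (intro LIMSEQ_le) (auto intro: less_imp_le)
  hence pmin: "norm (y - p) \<le> norm (y - v)" if "v \<in> W" for v using dle[OF that] by simp
  show ?thesis
  proof (intro bexI[OF _ pW] ballI)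
    fix v assume vW: "v \<in> W"
    define c where "c = ip (y - p) v"
    define u where "u = sm c v"
    have uW: "u \<in> W" unfolding u_def using csub_sm[OF W(1) vW] .
    have "ip (y - p) u = cnj c * c" unfolding u_def c_def by (rule ip_sm_right)
    also have "\<dots> = complex_of_real ((cmod c)\<^sup>2)" by (simp only: complex_norm_square mult.commute)
    finally have ipu: "ip (y - p) u = complex_of_real ((cmod c)\<^sup>2)" .
    define L where "L = (norm u)\<^sup>2"
    have ineq: "2 * (cmod c)\<^sup>2 \<le> t * L" if t: "t > 0" for t
    proof -
      have "p + t *\<^sub>R u \<in> W" using csub_add[OF W(1) pW csub_scaleR[OF W(1) uW]] .
      hence "norm (y - p) \<le> norm (y - (p + t *\<^sub>R u))" by (rule pmin)
      hence "(norm (y - p))\<^sup>2 \<le> (norm ((y - p) - t *\<^sub>R u))\<^sup>2"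
        by (simp add: diff_diff_eq power_mono del: power_mono_iff)
      also have "\<dots> = (norm (y - p))\<^sup>2 - 2 * Re (ip (y - p) (t *\<^sub>R u)) + (norm (t *\<^sub>R u))\<^sup>2"
        by (rule norm_diff_sq)
      also have "Re (ip (y - p) (t *\<^sub>R u)) = t * (cmod c)\<^sup>2"
        by (simp only: ip_scaleR_right ipu Re_complex_of_real of_real_mult[symmetric])
      also have "(norm (t *\<^sub>R u))\<^sup>2 = t\<^sup>2 * L"
        unfolding L_def using t by (simp add: power_mult_distrib)
      finally have "2 * (t * (cmod c)\<^sup>2) \<le> t * (t * L)" by (simp add: power2_eq_square)
      hence "t * (2 * (cmod c)\<^sup>2) \<le> t * (t * L)" by (simp add: algebra_simps)
      thus ?thesis using t by simp
    qed
    have "(cmod c)\<^sup>2 \<le> 0"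
    proof (rule ccontr)
      assume "\<not> (cmod c)\<^sup>2 \<le> 0"
      hence pos: "(cmod c)\<^sup>2 > 0" by simp
      have L0: "L \<ge> 0" unfolding L_def by simp
      define t where "t = (cmod c)\<^sup>2 / (L + 1)"
      have t0: "t > 0" unfolding t_def using pos L0 by simp
      have "t * L < (cmod c)\<^sup>2" unfolding t_def using pos L0 by (simp add: field_simps)
      thus False using ineq[OF t0] pos by simp
    qed
    thus "ip (y - p) v = 0" using c_def by simp
  qed
qed

end


context hil begin

definition bop :: "('a \<Rightarrow> 'a) \<Rightarrow> bool" where
  "bop B \<longleftrightarrow> (\<forall>x y. B (x + y) = B x + B y) \<and> (\<forall>a x. B (sm a x) = sm a (B x)) \<and>
     (\<exists>C. \<forall>x. norm (B x) \<le> C * norm x) \<and> (\<forall>x y. ip (B x) y = ip x (B y))"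

definition qf :: "('a \<Rightarrow> 'a) \<Rightarrow> 'a \<Rightarrow> real" where
  "qf B x = Re (ip (B x) x)"

definition apprU :: "'a set \<Rightarrow> ('a \<Rightarrow> 'a) \<Rightarrow> real \<Rightarrow> bool" where
  "apprU U B s \<longleftrightarrow> (\<forall>e>0. \<exists>x\<in>U. norm x = 1 \<and> norm (B x - s *\<^sub>R x) < e)"

definition invb :: "('a \<Rightarrow> 'a) \<Rightarrow> bool" where
  "invb f \<longleftrightarrow> bij f \<and> (\<exists>C. \<forall>x. norm x \<le> C * norm (f x))"

lemma bop_add: "bop B \<Longrightarrow> B (x + y) = B x + B y" unfolding bop_def by blast
lemma bop_sm: "bop B \<Longrightarrow> B (sm a x) = sm a (B x)" unfolding bop_def by blast
lemma bop_sym: "bop B \<Longrightarrow> ip (B x) y = ip x (B y)" unfolding bop_def by blast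
lemma bop_bound: assumes "bop B" obtains C where "C > 0" "\<And>x. norm (B x) \<le> C * norm x"
proof -
  obtain C where C: "\<And>x. norm (B x) \<le> C * norm x" using assms unfolding bop_def by blast
  have "norm (B x) \<le> (max C 1) * norm x" for x
    using C[of x] by (meson max.cobounded1 mult_right_mono norm_ge_zero order_trans)
  thus ?thesis using that[of "max C 1"] by simp
qed
lemma bop_scaleR: "bop B \<Longrightarrow> B (r *\<^sub>R x) = r *\<^sub>R B x"
  using bop_sm[of B "complex_of_real r" x] by (simp add: sm_real)
lemma bop_bl: assumes "bop B" shows "bounded_linear B"
proof -
  obtain C where C: "C > 0" "\<And>x. norm (B x) \<le> C * norm x" using bop_bound[OF assms] by blast
  show ?thesis
    by (rule bounded_linear_intro[where K=C]) (use C bop_add[OF assms] bop_scaleR[OF assms] in \<open>auto simp: mult.commute\<close>)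
qed
lemma bop_zero: "bop B \<Longrightarrow> B 0 = 0" using linear_0[OF bounded_linear.linear[OF bop_bl]] by blast
lemma bop_diff: "bop B \<Longrightarrow> B (x - y) = B x - B y" using linear_diff[OF bounded_linear.linear[OF bop_bl]] by blast
lemma bop_minus: "bop B \<Longrightarrow> B (- x) = - B x" using linear_neg[OF bounded_linear.linear[OF bop_bl]] by blast

lemma bop_shift: assumes "bop B" shows "bop (\<lambda>x. B x - s *\<^sub>R x)"
proof -
  obtain C where C: "C > 0" "\<And>x. norm (B x) \<le> C * norm x" using bop_bound[OF assms] by blast
  have "norm (B x - s *\<^sub>R x) \<le> (C + \<bar>s\<bar>) * norm x" for x
    using C(2)[of x] norm_triangle_ineq4[of "B x" "s *\<^sub>R x"] by (simp add: algebra_simps)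
  moreover have "sm a (s *\<^sub>R x) = s *\<^sub>R sm a x" for a x by (rule sm_scaleR_comm)
  ultimately show ?thesis unfolding bop_def using bop_add[OF assms] bop_sm[OF assms] bop_sym[OF assms]
    by (auto simp: algebra_simps sm_diff_right ip_diff_left ip_diff_right ip_scaleR_left ip_scaleR_right
        intro!: exI[of _ "C + \<bar>s\<bar>"])
qed

lemma bop_neg: assumes "bop B" shows "bop (\<lambda>x. - B x)"
proof -
  obtain C where C: "C > 0" "\<And>x. norm (B x) \<le> C * norm x" using bop_bound[OF assms] by blast
  show ?thesis unfolding bop_def using bop_add[OF assms] bop_sm[OF assms] bop_sym[OF assms] C
    by (auto simp: sm_minus_right ip_minus_left ip_minus_right)
qed

lemma bop_sq: assumes "bop B" shows "bop (\<lambda>x. B (B x))"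
proof -
  obtain C where C: "C > 0" "\<And>x. norm (B x) \<le> C * norm x" using bop_bound[OF assms] by blast
  have "norm (B (B x)) \<le> (C * C) * norm x" for x
    using C(2)[of "B x"] C(2)[of x] C(1) by (metis mult.assoc mult_left_mono order_trans less_imp_le)
  thus ?thesis unfolding bop_def using bop_add[OF assms] bop_sm[OF assms] bop_sym[OF assms] by auto
qed

lemma ip_self_B: assumes "bop B" shows "ip (B x) x = complex_of_real (qf B x)"
proof -
  have "ip (B x) x = cnj (ip (B x) x)" using bop_sym[OF assms, of x x] ip_conj[of x "B x"] by simp
  hence "Im (ip (B x) x) = 0" by (metis cnj.sel(2) equal_neg_zero)
  thus ?thesis unfolding qf_def by (simp add: complex_eq_iff)
qed

lemma qf_scaleR: assumes "bop B" shows "qf B (r *\<^sub>R x) = r\<^sup>2 * qf B x"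
  unfolding qf_def using bop_scaleR[OF assms]
  by (simp add: ip_scaleR_left ip_scaleR_right power2_eq_square)

lemma qf_shift: "qf (\<lambda>x. B x - s *\<^sub>R x) x = qf B x - s * (norm x)\<^sup>2"
  unfolding qf_def by (simp add: ip_diff_left ip_scaleR_left ip_self)

lemma qf_neg: "qf (\<lambda>x. - B x) x = - qf B x"
  unfolding qf_def by (simp add: ip_minus_left)

lemma qf_bound: "\<bar>qf B x\<bar> \<le> norm (B x) * norm x"
  unfolding qf_def using cauchy_schwarz[of "B x" x] abs_Re_le_cmod order_trans by blast

lemma qf_add: assumes "bop B"
  shows "qf B (x + y) - qf B (x - y) = 4 * Re (ip (B x) y)"
proof -
  have c: "ip (B y) x = cnj (ip (B x) y)" using bop_sym[OF assms, of y x] ip_conj[of "B y" "x"]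
    ip_conj[of y "B x"] by (metis ip_conj)
  show ?thesis unfolding qf_def using c
    by (simp add: bop_add[OF assms] bop_diff[OF assms] ip_add_left ip_add_right ip_diff_left ip_diff_right)
qed

lemma numrad: assumes "bop B" "\<And>x. \<bar>qf B x\<bar> \<le> N * (norm x)\<^sup>2"
  shows "norm (B x) \<le> N * norm x"
proof (cases "B x = 0")
  case True
  have "0 \<le> N * (norm x)\<^sup>2" using assms(2)[of x] by (meson abs_ge_zero order_trans)
  hence "0 \<le> N * norm x" by (cases "x = 0") (auto simp: zero_le_mult_iff)
  thus ?thesis using True by simp
next
  case False
  define y where "y = (norm x / norm (B x)) *\<^sub>R B x"
  have ny: "norm y = norm x" unfolding y_def using False by simp
  have "Re (ip (B x) y) = norm x * norm (B x)" unfolding y_def using False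
    by (simp add: ip_scaleR_right ip_self power2_eq_square)
  hence "4 * (norm x * norm (B x)) = qf B (x + y) - qf B (x - y)" using qf_add[OF assms(1)] by simp
  also have "\<dots> \<le> N * (norm (x + y))\<^sup>2 + N * (norm (x - y))\<^sup>2"
    using assms(2)[of "x + y"] assms(2)[of "x - y"] by (simp add: abs_le_iff)
  also have "\<dots> = N * (2 * (norm x)\<^sup>2 + 2 * (norm y)\<^sup>2)" unfolding parallelogram[of x y, symmetric] by (simp add: algebra_simps)
  also have "\<dots> = 4 * (N * norm x * norm x)" using ny by (simp add: power2_eq_square)
  finally have *: "norm x * norm (B x) \<le> N * norm x * norm x" by simp
  have "x \<noteq> 0" using False bop_zero[OF assms(1)] by auto
  hence "norm x > 0" by simp
  thus ?thesis using * by (simp add: mult.commute)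
qed

lemma pos_cs: assumes "bop P" "csubspace sm U" "\<And>z. z \<in> U \<Longrightarrow> P z \<in> U" "\<And>z. z \<in> U \<Longrightarrow> qf P z \<ge> 0"
  "C > 0" "\<And>z. norm (P z) \<le> C * norm z" "x \<in> U"
  shows "(norm (P x))\<^sup>2 \<le> C * qf P x"
proof -
  define t where "t = 1 / C"
  have Px: "P x \<in> U" using assms(3,7) .
  have "x - t *\<^sub>R P x \<in> U" using csub_diff[OF assms(2) assms(7) csub_scaleR[OF assms(2) Px]] .
  hence "0 \<le> qf P (x - t *\<^sub>R P x)" using assms(4) by blast
  also have "qf P (x - t *\<^sub>R P x) = qf P x - 2 * t * (norm (P x))\<^sup>2 + t\<^sup>2 * qf P (P x)"
  proof -
    have s: "ip (P (P x)) x = ip (P x) (P x)" using bop_sym[OF assms(1)] by simp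
    show ?thesis unfolding qf_def using s
      by (simp add: bop_diff[OF assms(1)] bop_scaleR[OF assms(1)] ip_diff_left ip_diff_right
          ip_scaleR_left ip_scaleR_right ip_self power2_eq_square algebra_simps)
  qed
  also have "qf P (P x) \<le> C * (norm (P x))\<^sup>2"
  proof -
    have a: "qf P (P x) \<le> norm (P (P x)) * norm (P x)" using qf_bound[of P "P x"] by simp
    have b: "norm (P (P x)) * norm (P x) \<le> C * norm (P x) * norm (P x)"
      by (rule mult_right_mono[OF assms(6)]) simp
    show ?thesis using a b by (simp add: power2_eq_square mult.assoc)
  qed
  finally have "0 \<le> qf P x - 2 * t * (norm (P x))\<^sup>2 + t\<^sup>2 * (C * (norm (P x))\<^sup>2)"
    by (simp add: mult_left_mono)
  also have "t\<^sup>2 * (C * (norm (P x))\<^sup>2) = t * (norm (P x))\<^sup>2" unfolding t_def using assms(5)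
    by (simp add: power2_eq_square)
  finally have "t * (norm (P x))\<^sup>2 \<le> qf P x" by simp
  thus ?thesis unfolding t_def using assms(5) by (simp add: field_simps)
qed

end


context hil begin

lemma supl:
  assumes B: "bop B" and U: "csubspace sm U" "\<And>z. z \<in> U \<Longrightarrow> B z \<in> U" and ne: "x0 \<in> U" "x0 \<noteq> 0"
  defines "M \<equiv> Sup ((\<lambda>x. qf B x) ` {x\<in>U. norm x = 1})"
  shows "\<And>x. x \<in> U \<Longrightarrow> qf B x \<le> M * (norm x)\<^sup>2" and "apprU U B M"
proof -
  obtain C where C: "C > 0" "\<And>x. norm (B x) \<le> C * norm x" using bop_bound[OF B] by blast
  define S where "S = (\<lambda>x. qf B x) ` {x\<in>U. norm x = 1}"
  have unit: "(1 / norm x) *\<^sub>R x \<in> U \<and> norm ((1 / norm x) *\<^sub>R x) = 1" if "x \<in> U" "x \<noteq> 0" for x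
    using that csub_scaleR[OF U(1)] by simp
  have Sne: "S \<noteq> {}" unfolding S_def using unit[OF ne] by blast
  have Sbdd: "bdd_above S" unfolding S_def
  proof (rule bdd_aboveI2[where M=C])
    fix x assume "x \<in> {x \<in> U. norm x = 1}"
    hence "norm x = 1" by simp
    thus "qf B x \<le> C" using qf_bound[of B x] C(2)[of x] by (simp add: abs_le_iff)
  qed
  show up: "qf B x \<le> M * (norm x)\<^sup>2" if x: "x \<in> U" for x
  proof (cases "x = 0")
    case True thus ?thesis unfolding qf_def by simp
  next
    case False
    define u where "u = (1 / norm x) *\<^sub>R x"
    have "qf B u \<in> S" unfolding S_def u_def using unit[OF x False] by blast
    hence "qf B u \<le> M" unfolding M_def S_def[symmetric] using Sbdd by (simp add: cSup_upper)
    moreover have "x = norm x *\<^sub>R u" unfolding u_def using False by simp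
    hence "qf B x = (norm x)\<^sup>2 * qf B u" using qf_scaleR[OF B, of "norm x" u] by simp
    ultimately show ?thesis using mult_right_mono[of "qf B u" M "(norm x)\<^sup>2"] by (simp add: mult.commute)
  qed
  define P where "P = (\<lambda>x. - (B x - M *\<^sub>R x))"
  have P: "bop P" unfolding P_def by (rule bop_neg[OF bop_shift[OF B]])
  obtain CP where CP: "CP > 0" "\<And>x. norm (P x) \<le> CP * norm x" using bop_bound[OF P] by blast
  have qfP: "qf P z = M * (norm z)\<^sup>2 - qf B z" for z unfolding P_def qf_neg qf_shift by simp
  have PU: "P z \<in> U" if "z \<in> U" for z unfolding P_def
    using U(2)[OF that] that csub_minus[OF U(1)] csub_diff[OF U(1)] csub_scaleR[OF U(1)] by blast
  have Ppos: "qf P z \<ge> 0" if "z \<in> U" for z using up[OF that] qfP by simp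
  show "apprU U B M" unfolding apprU_def
  proof (intro allI impI)
    fix e :: real assume e: "e > 0"
    have "M - e\<^sup>2 / CP < M" using e CP by simp
    then obtain v where v: "v \<in> S" "M - e\<^sup>2 / CP < v" using less_cSup_iff[OF Sne Sbdd] unfolding M_def S_def by blast
    then obtain x where x: "x \<in> U" "norm x = 1" "v = qf B x" unfolding S_def by blast
    have "(norm (P x))\<^sup>2 \<le> CP * qf P x" by (rule pos_cs[OF P U(1) PU Ppos CP x(1)])
    also have "qf P x < e\<^sup>2 / CP" using qfP[of x] x v by simp
    hence "CP * qf P x < e\<^sup>2" using CP by (simp add: field_simps)
    finally have "(norm (P x))\<^sup>2 < e\<^sup>2" .
    hence "norm (P x) < e" using e by (simp add: power_less_imp_less_base)
    hence "norm (B x - M *\<^sub>R x) < e" unfolding P_def by (simp add: norm_minus_commute)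
    thus "\<exists>x\<in>U. norm x = 1 \<and> norm (B x - M *\<^sub>R x) < e" using x by blast
  qed
qed

lemma invb_pos: assumes "invb f" obtains C where "C > 0" "\<And>x. norm x \<le> C * norm (f x)"
proof -
  obtain C where C: "\<And>x. norm x \<le> C * norm (f x)" using assms unfolding invb_def by blast
  have "norm x \<le> max C 1 * norm (f x)" for x
    using C[of x] by (meson max.cobounded1 mult_right_mono norm_ge_zero order_trans)
  thus ?thesis using that[of "max C 1"] by simp
qed

lemma not_appr: assumes "C > 0" "\<And>x. norm x \<le> C * norm (B x - s *\<^sub>R x)" shows "\<not> apprU U B s"
proof
  assume "apprU U B s"
  moreover have "1 / C > 0" using assms(1) by simp
  ultimately obtain x where x: "norm x = 1" "norm (B x - s *\<^sub>R x) < 1 / C"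
    unfolding apprU_def by blast
  have "1 \<le> C * norm (B x - s *\<^sub>R x)" using assms(2)[of x] x(1) by simp
  also have "\<dots> < C * (1 / C)" using x(2) assms(1) by (intro mult_strict_left_mono) auto
  finally show False using assms(1) by simp
qed

lemma invb_not_appr: assumes "invb (\<lambda>x. B x - s *\<^sub>R x)" shows "\<not> apprU U B s"
proof -
  obtain C where "C > 0" "\<And>x. norm x \<le> C * norm (B x - s *\<^sub>R x)" using invb_pos[OF assms] by blast
  thus ?thesis using not_appr by blast
qed

lemma invb_comp: assumes "invb f" "invb g" shows "invb (\<lambda>x. f (g x))"
proof -
  obtain C where C: "C > 0" "\<And>x. norm x \<le> C * norm (f x)" using invb_pos[OF assms(1)] by blast
  obtain D where D: "D > 0" "\<And>x. norm x \<le> D * norm (g x)" using invb_pos[OF assms(2)] by blast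
  have "norm x \<le> (D * C) * norm (f (g x))" for x
    using D(2)[of x] C(2)[of "g x"] D(1) by (metis mult.assoc mult_left_mono order_trans less_imp_le)
  moreover have "bij (\<lambda>x. f (g x))" using assms unfolding invb_def using bij_comp[of g f]
    by (simp add: comp_def)
  ultimately show ?thesis unfolding invb_def by blast
qed

lemma appr_mono: "apprU U B s \<Longrightarrow> U \<subseteq> V \<Longrightarrow> apprU V B s"
  unfolding apprU_def by blast

lemma appr_transfer:
  assumes B: "bop B" and G: "bop G" and inv: "\<And>x. B (G x) - w *\<^sub>R G x = x"
    and ap: "apprU UNIV G \<mu>" and mu: "\<mu> \<noteq> 0"
  shows "apprU UNIV B (w + 1 / \<mu>)"
  unfolding apprU_def
proof (intro allI impI)
  fix e :: real assume e: "e > 0"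
  define m where "m = \<bar>\<mu>\<bar>"
  have m: "m > 0" unfolding m_def using mu by simp
  define ep where "ep = min (m / 2) (e * m * m / 2)"
  have ep: "ep > 0" unfolding ep_def using m e by simp
  obtain x where x: "norm x = 1" "norm (G x - \<mu> *\<^sub>R x) < ep" using ap ep unfolding apprU_def by blast
  define y where "y = G x"
  have ny: "norm y \<ge> m / 2"
  proof -
    have "\<mu> *\<^sub>R x = y - (G x - \<mu> *\<^sub>R x)" unfolding y_def by simp
    hence "norm (\<mu> *\<^sub>R x) \<le> norm y + norm (G x - \<mu> *\<^sub>R x)" using norm_triangle_ineq4 by metis
    hence "m \<le> norm y + ep" using x unfolding m_def by simp
    thus ?thesis unfolding ep_def by linarith
  qed
  have By: "B y - (w + 1 / \<mu>) *\<^sub>R y = - ((1 / \<mu>) *\<^sub>R (G x - \<mu> *\<^sub>R x))"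
    using inv[of x] mu unfolding y_def by (simp add: algebra_simps)
  have "norm (B y - (w + 1 / \<mu>) *\<^sub>R y) = norm (G x - \<mu> *\<^sub>R x) / m"
    unfolding By m_def by (simp add: divide_inverse)
  hence nBy: "norm (B y - (w + 1 / \<mu>) *\<^sub>R y) < ep / m" using x(2) m
    by (simp add: divide_strict_right_mono)
  define z where "z = (1 / norm y) *\<^sub>R y"
  have y0: "norm y > 0" using ny m by linarith
  have nz: "norm z = 1" unfolding z_def using y0 by simp
  have "B z - (w + 1 / \<mu>) *\<^sub>R z = (1 / norm y) *\<^sub>R (B y - (w + 1 / \<mu>) *\<^sub>R y)"
    unfolding z_def using bop_scaleR[OF B] by (simp add: algebra_simps)
  hence "norm (B z - (w + 1 / \<mu>) *\<^sub>R z) = norm (B y - (w + 1 / \<mu>) *\<^sub>R y) / norm y" by simp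
  also have "\<dots> \<le> norm (B y - (w + 1 / \<mu>) *\<^sub>R y) / (m / 2)"
    using ny m y0 by (intro divide_left_mono) auto
  also have "\<dots> < (ep / m) / (m / 2)"
    using nBy m by (intro divide_strict_right_mono) auto
  also have "\<dots> \<le> e" unfolding ep_def using m e by (simp add: field_simps)
  finally show "\<exists>x\<in>UNIV. norm x = 1 \<and> norm (B x - (w + 1 / \<mu>) *\<^sub>R x) < e" using nz by blast
qed

end


context hil begin

lemma resolvent_bound:
  assumes B: "bop B" and iv: "invb (\<lambda>x. B x - w *\<^sub>R x)" and d: "d > 0"
    and na: "\<And>s. \<bar>s - w\<bar> < d \<Longrightarrow> \<not> apprU UNIV B s"
  shows "d * norm x \<le> norm (B x - w *\<^sub>R x)"
proof -
  define f where "f = (\<lambda>x. B x - w *\<^sub>R x)"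
  have fb: "bop f" unfolding f_def by (rule bop_shift[OF B])
  have bij: "bij f" using iv unfolding invb_def f_def by blast
  define G where "G = inv f"
  have fG: "f (G y) = y" for y unfolding G_def using bij by (simp add: bij_is_surj surj_f_inv_f)
  have Gf: "G (f y) = y" for y unfolding G_def using bij by (simp add: bij_is_inj inv_f_f)
  obtain C where C: "C > 0" "\<And>x. norm x \<le> C * norm (f x)" using invb_pos[OF iv] unfolding f_def by blast
  have Gb: "bop G" unfolding bop_def
  proof (intro conjI allI exI)
    fix x y show "G (x + y) = G x + G y"
      by (metis Gf fG bop_add[OF fb])
  next
    fix a x show "G (sm a x) = sm a (G x)"
      by (metis Gf fG bop_sm[OF fb])
  next
    fix x show "norm (G x) \<le> C * norm x" using C(2)[of "G x"] fG by simp
  next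
    fix x y show "ip (G x) y = ip x (G y)"
      using bop_sym[OF fb, of "G x" "G y"] fG by simp
  qed
  show ?thesis
  proof (cases "\<exists>x0. x0 \<noteq> (0::'a)")
    case False hence "x = 0" by blast
    thus ?thesis by simp
  next
    case True
    then obtain x0 :: 'a where x0: "x0 \<noteq> 0" by blast
    have U: "csubspace sm (UNIV::'a set)" unfolding csubspace_def by blast
    define M where "M = Sup ((\<lambda>x. qf G x) ` {x\<in>UNIV. norm x = 1})"
    have M1: "qf G x \<le> M * (norm x)\<^sup>2" for x using supl(1)[OF Gb U _ _ x0] M_def by blast
    have M2: "apprU UNIV G M" using supl(2)[OF Gb U _ _ x0] M_def by blast
    have nGb: "bop (\<lambda>x. - G x)" by (rule bop_neg[OF Gb])
    define M' where "M' = Sup ((\<lambda>x. qf (\<lambda>x. - G x) x) ` {x\<in>UNIV. norm x = 1})"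
    have M'1: "qf (\<lambda>x. - G x) x \<le> M' * (norm x)\<^sup>2" for x using supl(1)[OF nGb U _ _ x0] M'_def by blast
    have M'2: "apprU UNIV (\<lambda>x. - G x) M'" using supl(2)[OF nGb U _ _ x0] M'_def by blast
    have inv: "B (G y) - w *\<^sub>R G y = y" for y using fG unfolding f_def by simp
    have Mle: "M \<le> 1 / d"
    proof (rule ccontr)
      assume "\<not> M \<le> 1 / d"
      hence Mg: "M > 1 / d" by simp
      hence M0: "M > 0" using d by (meson divide_pos_pos less_trans zero_less_one)
      have "apprU UNIV B (w + 1 / M)" using appr_transfer[OF B Gb inv M2] M0 by simp
      moreover have "\<bar>(w + 1 / M) - w\<bar> < d" using Mg M0 d by (simp add: field_simps)
      ultimately show False using na by blast
    qed
    have M'le: "M' \<le> 1 / d"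
    proof (rule ccontr)
      assume "\<not> M' \<le> 1 / d"
      hence Mg: "M' > 1 / d" by simp
      hence M0: "M' > 0" using d by (meson divide_pos_pos less_trans zero_less_one)
      have "apprU UNIV G (- M')" using M'2 unfolding apprU_def
        by (simp add: norm_minus_commute[of "- G _"] add.commute)
      hence "apprU UNIV B (w + 1 / (- M'))" using appr_transfer[OF B Gb inv, of "- M'"] M0 by simp
      moreover have "\<bar>(w + 1 / (- M')) - w\<bar> < d" using Mg M0 d by (simp add: field_simps)
      ultimately show False using na by blast
    qed
    have "\<bar>qf G y\<bar> \<le> (1 / d) * (norm y)\<^sup>2" for y
    proof -
      have "qf G y \<le> (1 / d) * (norm y)\<^sup>2" using M1[of y] Mle
        by (meson mult_right_mono order_trans zero_le_power2)
      moreover have "- qf G y \<le> (1 / d) * (norm y)\<^sup>2" using M'1[of y] M'le qf_neg[of G y]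
        by (metis mult_right_mono order_trans zero_le_power2)
      ultimately show ?thesis by (simp add: abs_le_iff)
    qed
    hence "norm (G y) \<le> (1 / d) * norm y" for y using numrad[OF Gb] by blast
    from this[of "f x"] have "norm x \<le> (1 / d) * norm (f x)" using Gf by simp
    thus ?thesis unfolding f_def using d by (simp add: field_simps)
  qed
qed

lemma csub_closure: assumes "csubspace sm V" shows "csubspace sm (closure V)"
  unfolding csubspace_def
proof (intro conjI ballI allI)
  show "0 \<in> closure V" using csub_zero[OF assms] closure_subset by blast
next
  fix x y assume "x \<in> closure V" "y \<in> closure V"
  then obtain a b where a: "\<forall>n. a n \<in> V" "a \<longlonglongrightarrow> x" and b: "\<forall>n. b n \<in> V" "b \<longlonglongrightarrow> y"
    unfolding closure_sequential by blast
  have "(\<lambda>n. a n + b n) \<longlonglongrightarrow> x + y" by (intro tendsto_intros a b)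
  moreover have "\<forall>n. a n + b n \<in> V" using a b csub_add[OF assms] by blast
  ultimately show "x + y \<in> closure V" unfolding closure_sequential by (intro exI[of _ "\<lambda>n. a n + b n"] conjI)
next
  fix c x assume "x \<in> closure V"
  then obtain a where a: "\<forall>n. a n \<in> V" "a \<longlonglongrightarrow> x" unfolding closure_sequential by blast
  have "(\<lambda>n. sm c (a n)) \<longlonglongrightarrow> sm c x" by (rule bounded_linear.tendsto[OF bl_sm a(2)])
  moreover have "\<forall>n. sm c (a n) \<in> V" using a csub_sm[OF assms] by blast
  ultimately show "sm c x \<in> closure V" unfolding closure_sequential by (intro exI[of _ "\<lambda>n. sm c (a n)"] conjI)
qed

lemma isolated_bound:
  assumes T: "bop T" and eta: "\<eta> > 0"
    and gd: "\<And>s. 0 < \<bar>s - w\<bar> \<Longrightarrow> \<bar>s - w\<bar> < \<eta> \<Longrightarrow> invb (\<lambda>x. T x - s *\<^sub>R x)"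
    and xo: "\<And>k. T k = w *\<^sub>R k \<Longrightarrow> ip x k = 0"
  shows "\<eta> * norm x \<le> norm (T x - w *\<^sub>R x)"
proof -
  define S where "S = (\<lambda>x. T x - w *\<^sub>R x)"
  have Sb: "bop S" unfolding S_def by (rule bop_shift[OF T])
  define R where "R = (\<lambda>x. S (S x))"
  have Rb: "bop R" unfolding R_def by (rule bop_sq[OF Sb])
  have comp: "(\<lambda>x. R x - (a * a) *\<^sub>R x) = (\<lambda>x. (\<lambda>z. T z - (w + a) *\<^sub>R z) ((\<lambda>z. T z - (w - a) *\<^sub>R z) x))" for a
    unfolding R_def S_def
    by (rule ext) (simp add: bop_diff[OF T] bop_add[OF T] bop_scaleR[OF T] algebra_simps)
  have invR: "invb (\<lambda>x. R x - (a * a) *\<^sub>R x)" if a: "0 < a" "a < \<eta>" for a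
    unfolding comp by (rule invb_comp; rule gd) (use a in auto)
  have naR: "\<not> apprU UNIV R s" if s: "0 < s" "s < \<eta>\<^sup>2" for s
  proof -
    have "sqrt s < sqrt (\<eta>\<^sup>2)" using s(2) real_sqrt_less_iff by blast
    hence "sqrt s < \<eta>" using eta by simp
    moreover have "sqrt s > 0" using s by simp
    ultimately have "invb (\<lambda>x. R x - (sqrt s * sqrt s) *\<^sub>R x)" using invR by blast
    hence "invb (\<lambda>x. R x - s *\<^sub>R x)" using s by simp
    thus ?thesis using s by (simp add: invb_not_appr)
  qed
  define c where "c = \<eta>\<^sup>2 / 2"
  have c0: "c > 0" unfolding c_def using eta by simp
  have "invb (\<lambda>x. R x - c *\<^sub>R x)"
  proof -
    define a where "a = \<eta> / sqrt 2"
    have a: "0 < a" "a < \<eta>" unfolding a_def using eta by (auto simp: field_simps)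
    have "a * a = c" unfolding a_def c_def by (simp add: power2_eq_square)
    thus ?thesis using invR[OF a] by simp
  qed
  hence rb: "c * norm y \<le> norm (R y - c *\<^sub>R y)" for y
  proof (rule resolvent_bound[OF Rb _ c0])
    fix s assume "\<bar>s - c\<bar> < c"
    hence "0 < s" "s < \<eta>\<^sup>2" unfolding c_def abs_less_iff by linarith+
    thus "\<not> apprU UNIV R s" by (rule naR)
  qed
  have key: "\<eta> * norm (S y) \<le> norm (S (S y))" for y
  proof -
    have "(c * norm y)\<^sup>2 \<le> (norm (R y - c *\<^sub>R y))\<^sup>2" using rb[of y] c0 by (simp add: power_mono)
    also have "\<dots> = (norm (R y))\<^sup>2 - 2 * Re (ip (R y) (c *\<^sub>R y)) + (norm (c *\<^sub>R y))\<^sup>2" by (rule norm_diff_sq)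
    also have "Re (ip (R y) (c *\<^sub>R y)) = c * (norm (S y))\<^sup>2"
      unfolding R_def using bop_sym[OF Sb, of "S y" y] by (simp add: ip_scaleR_right ip_self)
    finally have "2 * c * (norm (S y))\<^sup>2 \<le> (norm (S (S y)))\<^sup>2" unfolding R_def using c0
      by (simp add: power_mult_distrib)
    hence "(\<eta> * norm (S y))\<^sup>2 \<le> (norm (S (S y)))\<^sup>2" unfolding c_def by (simp add: power_mult_distrib)
    thus ?thesis by (rule power2_le_imp_le) simp
  qed
  define W where "W = closure (range S)"
  have rS: "csubspace sm (range S)" unfolding csubspace_def
  proof (intro conjI ballI allI)
    have "S 0 = 0" using bop_zero[OF Sb] .
    thus "0 \<in> range S" using rangeI[of S 0] by simp
    fix u v assume "u \<in> range S" "v \<in> range S"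
    then obtain u' v' where "u = S u'" "v = S v'" by blast
    hence "u + v = S (u' + v')" using bop_add[OF Sb] by simp
    thus "u + v \<in> range S" by simp
  next
    fix a u assume "u \<in> range S"
    then obtain u' where "u = S u'" by blast
    hence "sm a u = S (sm a u')" using bop_sm[OF Sb] by simp
    thus "sm a u \<in> range S" by simp
  qed
  have Wc: "csubspace sm W" unfolding W_def by (rule csub_closure[OF rS])
  have Wcl: "closed W" unfolding W_def by simp
  have cont: "continuous_on UNIV S" using bounded_linear.continuous_on[OF bop_bl[OF Sb] continuous_on_id] by simp
  have clset: "closed {y. \<eta> * norm y \<le> norm (S y)}"
  proof (rule closed_Collect_le)
    show "continuous_on UNIV (\<lambda>y. \<eta> * norm y)" by (intro continuous_intros)
    show "continuous_on UNIV (\<lambda>y. norm (S y))" using continuous_on_norm[OF cont] by simp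
  qed
  have "range S \<subseteq> {y. \<eta> * norm y \<le> norm (S y)}" using key by auto
  hence Wb: "W \<subseteq> {y. \<eta> * norm y \<le> norm (S y)}" unfolding W_def by (rule closure_minimal[OF _ clset])
  from proj_closed[OF Wc Wcl, of x] obtain p where p: "p \<in> W" "\<forall>v\<in>W. ip (x - p) v = 0" by (elim bexE)
  have "ip (S (x - p)) z = 0" for z
  proof -
    have "S z \<in> range S" by (rule rangeI)
    hence "S z \<in> W" unfolding W_def using closure_subset[of "range S"] by (rule subsetD[rotated])
    hence "ip (x - p) (S z) = 0" using p(2) by blast
    thus ?thesis using bop_sym[OF Sb, of "x - p" z] by simp
  qed
  hence "S (x - p) = 0" using ip_zero_all by blast
  hence "T (x - p) = w *\<^sub>R (x - p)" unfolding S_def by simp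
  hence "ip x (x - p) = 0" by (rule xo)
  moreover have "ip p (x - p) = cnj (ip (x - p) p)" by (rule ip_conj)
  hence "ip p (x - p) = 0" using p by simp
  ultimately have "ip (x - p) (x - p) = 0" by (simp add: ip_diff_left)
  hence "x = p" using ip_self_zero_iff by simp
  hence "x \<in> W" using p by simp
  thus ?thesis using Wb unfolding S_def by blast
qed

end


context hil begin

lemma orth_cspan: assumes "\<forall>b\<in>B. ip y b = 0" "k \<in> cspan B" shows "ip y k = 0"
proof -
  from assms(2) obtain c where "k = (\<Sum>b\<in>B. sm (c b) b)" unfolding cspan_def by blast
  thus ?thesis using assms(1) by (simp add: ip_sum_right ip_sm_right)
qed

lemma eig_csub: assumes "bop T" shows "csubspace sm {x. T x = w *\<^sub>R x}"
  unfolding csubspace_def using bop_zero[OF assms] bop_add[OF assms] bop_sm[OF assms]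
  by (auto simp: scaleR_add_right sm_scaleR_comm)

lemma appr_neg: "apprU U (\<lambda>x. - T x) M \<Longrightarrow> apprU U T (- M)"
  unfolding apprU_def by (simp add: norm_minus_commute[of "- T _"] add.commute)

lemma core_bounded:
  assumes T: "bop T" and N: "finite N" "\<forall>w\<in>N. w < 0"
    and gd: "\<And>w. w < 0 \<Longrightarrow> w \<notin> N \<Longrightarrow> invb (\<lambda>x. T x - w *\<^sub>R x)"
    and fd: "\<And>w. w \<in> N \<Longrightarrow> cfin_dim sm {x. T x = w *\<^sub>R x}"
  shows "\<exists>Bs. finite Bs \<and> ons Bs \<and> (\<forall>b\<in>Bs. \<exists>w\<in>N. T b = w *\<^sub>R b) \<and>
           (\<forall>x. (\<forall>b\<in>Bs. ip x b = 0) \<longrightarrow> qf T x \<ge> 0)"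
proof -
  define K where "K w = {x. T x = w *\<^sub>R x}" for w
  have "\<forall>w\<in>N. \<exists>B. finite B \<and> ons B \<and> B \<subseteq> K w \<and> K w = cspan B"
  proof
    fix w assume "w \<in> N"
    thus "\<exists>B. finite B \<and> ons B \<and> B \<subseteq> K w \<and> K w = cspan B"
      unfolding K_def by (rule fd_basis[OF eig_csub[OF T] fd])
  qed
  from bchoice[OF this] obtain Bf where Bf: "\<forall>w\<in>N. finite (Bf w) \<and> ons (Bf w) \<and> Bf w \<subseteq> K w \<and> K w = cspan (Bf w)"
    by (elim exE)
  define Bs where "Bs = (\<Union>w\<in>N. Bf w)"
  have fin: "finite Bs" unfolding Bs_def using N(1) Bf by blast
  have eig: "T b = w *\<^sub>R b" if "w \<in> N" "b \<in> Bf w" for w b using Bf that unfolding K_def by blast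
  have onsB: "ons Bs" unfolding ons_def
  proof (intro conjI ballI impI)
    fix b assume "b \<in> Bs"
    then obtain w where "w \<in> N" "b \<in> Bf w" unfolding Bs_def by blast
    thus "ip b b = 1" using Bf unfolding ons_def by blast
  next
    fix b b' assume bb: "b \<in> Bs" "b' \<in> Bs" "b \<noteq> b'"
    then obtain w w' where w: "w \<in> N" "b \<in> Bf w" "w' \<in> N" "b' \<in> Bf w'" unfolding Bs_def by blast
    show "ip b b' = 0"
    proof (cases "w = w'")
      case True thus ?thesis using w bb(3) Bf unfolding ons_def by blast
    next
      case False
      have "complex_of_real w * ip b b' = ip (T b) b'" using eig[OF w(1,2)] by (simp add: ip_scaleR_left)
      also have "\<dots> = ip b (T b')" by (rule bop_sym[OF T])
      also have "\<dots> = complex_of_real w' * ip b b'" using eig[OF w(3,4)] by (simp add: ip_scaleR_right)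
      finally have "complex_of_real (w - w') * ip b b' = 0" by (simp add: algebra_simps)
      thus ?thesis using False by simp
    qed
  qed
  have eigB: "\<forall>b\<in>Bs. \<exists>w\<in>N. T b = w *\<^sub>R b" unfolding Bs_def using eig by blast
  have pos: "qf T x \<ge> 0" if xo: "\<forall>b\<in>Bs. ip x b = 0" for x
  proof (rule ccontr)
    assume neg: "\<not> qf T x \<ge> 0"
    define U where "U = {y. \<forall>b\<in>Bs. ip y b = 0}"
    have Uc: "csubspace sm U" unfolding U_def csubspace_def
      by (auto simp: ip_add_left ip_sm_left)
    have TU: "T y \<in> U" if "y \<in> U" for y
    proof -
      have "ip (T y) b = 0" if b: "b \<in> Bs" for b
      proof -
        obtain w where "w \<in> N" "T b = w *\<^sub>R b" using eigB b by blast
        hence "ip (T y) b = complex_of_real w * ip y b" using bop_sym[OF T, of y b] by (simp add: ip_scaleR_right)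
        thus ?thesis using \<open>y \<in> U\<close> b unfolding U_def by simp
      qed
      thus ?thesis unfolding U_def by blast
    qed
    have xU: "x \<in> U" using xo unfolding U_def by blast
    have x0: "x \<noteq> 0" using neg unfolding qf_def by auto
    have nT: "bop (\<lambda>y. - T y)" by (rule bop_neg[OF T])
    have nTU: "- T y \<in> U" if "y \<in> U" for y using csub_minus[OF Uc TU[OF that]] .
    define M where "M = Sup ((\<lambda>y. qf (\<lambda>y. - T y) y) ` {y\<in>U. norm y = 1})"
    have M1: "qf (\<lambda>y. - T y) y \<le> M * (norm y)\<^sup>2" if "y \<in> U" for y
      using supl(1)[OF nT Uc nTU xU x0 that] M_def by simp
    have M2: "apprU U (\<lambda>y. - T y) M" using supl(2)[OF nT Uc nTU xU x0] M_def by simp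
    have "- qf T x \<le> M * (norm x)\<^sup>2" using M1[OF xU] qf_neg[of T x] by simp
    moreover have "- qf T x > 0" using neg by simp
    moreover have "(norm x)\<^sup>2 > 0" using x0 by simp
    ultimately have M0: "M > 0" by (meson less_le_trans zero_less_mult_pos2 not_le mult_le_0_iff less_le_not_le)
    define w where "w = - M"
    have w0: "w < 0" unfolding w_def using M0 by simp
    have ap: "apprU U T w" unfolding w_def by (rule appr_neg[OF M2])
    show False
    proof (cases "w \<in> N")
      case False
      thus False using invb_not_appr[OF gd[OF w0 False]] ap by blast
    next
      case True
      define D where "D = insert (- w) ((\<lambda>v. \<bar>v - w\<bar>) ` (N - {w}))"
      have Dfin: "finite D" unfolding D_def using N(1) by simp
      have Dpos: "\<forall>d\<in>D. d > 0" unfolding D_def using w0 by auto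
      define \<eta> where "\<eta> = Min D"
      have eta: "\<eta> > 0" unfolding \<eta>_def using Dfin Dpos D_def by simp
      have etaw: "\<eta> \<le> - w" unfolding \<eta>_def D_def using Dfin D_def by simp
      have etav: "\<eta> \<le> \<bar>v - w\<bar>" if "v \<in> N" "v \<noteq> w" for v
        unfolding \<eta>_def using Dfin that unfolding D_def by (intro Min_le) auto
      have gd2: "invb (\<lambda>y. T y - s *\<^sub>R y)" if s: "0 < \<bar>s - w\<bar>" "\<bar>s - w\<bar> < \<eta>" for s
      proof (rule gd)
        show "s < 0" using s etaw by (simp add: abs_less_iff)
        show "s \<notin> N"
        proof
          assume "s \<in> N"
          moreover have "s \<noteq> w" using s by auto
          ultimately have "\<eta> \<le> \<bar>s - w\<bar>" by (rule etav)
          thus False using s by simp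
        qed
      qed
      have bound: "\<eta> * norm y \<le> norm (T y - w *\<^sub>R y)" if yU: "y \<in> U" for y
      proof (rule isolated_bound[OF T eta gd2])
        fix k assume "T k = w *\<^sub>R k"
        hence "k \<in> cspan (Bf w)" using Bf True unfolding K_def by blast
        moreover have "\<forall>b\<in>Bf w. ip y b = 0" using yU True unfolding U_def Bs_def by blast
        ultimately show "ip y k = 0" using orth_cspan by blast
      qed (simp_all)
      obtain y where y: "y \<in> U" "norm y = 1" "norm (T y - w *\<^sub>R y) < \<eta>" using ap eta unfolding apprU_def by blast
      show False using bound[OF y(1)] y by simp
    qed
  qed
  show ?thesis using fin onsB eigB pos by blast
qed

end


locale hilop = hil sm ip for sm :: "complex \<Rightarrow> 'a::banach \<Rightarrow> 'a" and ip +
  fixes D :: "'a set" and A :: "'a \<Rightarrow> 'a"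
  assumes Dsub: "csubspace sm D" and Alin: "clinear_on sm D A"
    and Asym: "\<And>x y. x \<in> D \<Longrightarrow> y \<in> D \<Longrightarrow> ip (A x) y = ip x (A y)"
begin

lemma A_add: "x \<in> D \<Longrightarrow> y \<in> D \<Longrightarrow> A (x + y) = A x + A y"
  using Alin unfolding clinear_on_def by blast
lemma A_sm: "x \<in> D \<Longrightarrow> A (sm a x) = sm a (A x)"
  using Alin unfolding clinear_on_def by blast
lemma A_zero: "A 0 = 0"
  using A_add[of 0 0] csub_zero[OF Dsub] by simp
lemma A_scaleR: "x \<in> D \<Longrightarrow> A (r *\<^sub>R x) = r *\<^sub>R A x"
  using A_sm[of x "complex_of_real r"] by (simp add: sm_real)
lemma A_minus: "x \<in> D \<Longrightarrow> A (- x) = - A x"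
  using A_scaleR[of x "-1"] by simp
lemma A_diff: "x \<in> D \<Longrightarrow> y \<in> D \<Longrightarrow> A (x - y) = A x - A y"
  using A_add[of x "- y"] A_minus[of y] csub_minus[OF Dsub, of y] by simp
lemma A_sum: "(\<And>s. s \<in> S \<Longrightarrow> f s \<in> D) \<Longrightarrow> A (\<Sum>s\<in>S. f s) = (\<Sum>s\<in>S. A (f s))"
proof (induction S rule: infinite_finite_induct)
  case (infinite S) thus ?case by (simp add: A_zero)
next
  case empty thus ?case by (simp add: A_zero)
next
  case (insert x F)
  have "(\<Sum>s\<in>F. f s) \<in> D" using csub_sum[OF Dsub] insert.prems by blast
  thus ?case using insert A_add[of "f x" "sum f F"] by simp
qed

lemma final_abstract:
  fixes lam \<sigma> \<kappa> \<kappa>' :: real and c :: "'a \<Rightarrow> real" and Bs :: "'a set" and V :: "nat \<Rightarrow> 'a set"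
  assumes sig: "\<bar>\<sigma>\<bar> = 1"
    and Bs: "finite Bs" "ons Bs" "Bs \<subseteq> D"
    and eig: "\<And>b. b \<in> Bs \<Longrightarrow> A b - lam *\<^sub>R b = c b *\<^sub>R b"
    and kap: "\<kappa> > 0" "\<And>b. b \<in> Bs \<Longrightarrow> \<sigma> * c b \<le> - \<kappa>"
    and kap': "\<kappa>' > 0" "\<And>f. f \<in> D \<Longrightarrow> (\<forall>b\<in>Bs. ip f b = 0) \<Longrightarrow>
        \<kappa>' * (norm f)\<^sup>2 \<le> \<sigma> * Re (ip (A f - lam *\<^sub>R f) f)"
    and V: "\<And>n. csubspace sm (V n) \<and> cfin_dim sm (V n) \<and> V n \<subseteq> D \<and> V n \<subseteq> V (Suc n)"
    and dense: "\<And>x e. x \<in> D \<Longrightarrow> e > 0 \<Longrightarrow> \<exists>n. \<exists>v\<in>V n. norm (x - v) + norm (A x - A v) < e"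
    and spu: "\<And>e. e > 0 \<Longrightarrow> \<forall>\<^sub>F n in sequentially. \<exists>z\<in>compr_spectrum sm ip (V n) A. cmod (z - complex_of_real lam) < e"
  shows False
proof -
  define B0 where "B0 x = A x - lam *\<^sub>R x" for x
  have B0add: "B0 (x + y) = B0 x + B0 y" if "x \<in> D" "y \<in> D" for x y
    unfolding B0_def using A_add[OF that] by (simp add: algebra_simps)
  have B0diff: "B0 (x - y) = B0 x - B0 y" if "x \<in> D" "y \<in> D" for x y
    unfolding B0_def using A_diff[OF that] by (simp add: algebra_simps)
  have B0sym: "ip (B0 x) y = ip x (B0 y)" if "x \<in> D" "y \<in> D" for x y
    unfolding B0_def using Asym[OF that] by (simp add: ip_diff_left ip_diff_right ip_scaleR_left ip_scaleR_right)
  define m where "m = real (card Bs)"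
  have m0: "m \<ge> 0" unfolding m_def by simp
  define \<kappa>0 where "\<kappa>0 = min \<kappa> \<kappa>'"
  have k0: "\<kappa>0 > 0" unfolding \<kappa>0_def using kap(1) kap'(1) by simp
  define K where "K = 3 + 2 * m + 2 * m * (1 + \<bar>lam\<bar>)"
  have K0: "K > 0" unfolding K_def using m0 by (simp add: add_pos_nonneg)
  define \<epsilon> where "\<epsilon> = min 1 (\<kappa>0 / (2 * K))"
  have ep0: "\<epsilon> > 0" unfolding \<epsilon>_def using k0 K0 by simp
  have ep1: "\<epsilon> \<le> 1" unfolding \<epsilon>_def by simp
  have epK: "\<epsilon> * K < \<kappa>0"
  proof -
    have "\<epsilon> * K \<le> (\<kappa>0 / (2 * K)) * K" unfolding \<epsilon>_def using K0 by (intro mult_right_mono) auto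
    also have "\<dots> = \<kappa>0 / 2" using K0 by simp
    finally show ?thesis using k0 by simp
  qed
  have Vmono: "V i \<subseteq> V j" if "i \<le> j" for i j
    using lift_Suc_mono_le[of V, OF _ that] V by blast
  have "\<forall>b\<in>Bs. \<exists>i u. u \<in> V i \<and> norm (b - u) + norm (A b - A u) < \<epsilon>"
    using dense ep0 Bs(3) by blast
  from bchoice[OF this] obtain nb where "\<forall>b\<in>Bs. \<exists>u. u \<in> V (nb b) \<and> norm (b - u) + norm (A b - A u) < \<epsilon>"
    by (elim exE)
  from bchoice[OF this] obtain ub where ub: "\<forall>b\<in>Bs. ub b \<in> V (nb b) \<and> norm (b - ub b) + norm (A b - A (ub b)) < \<epsilon>"
    by (elim exE)
  define N0 where "N0 = Max (insert 0 (nb ` Bs))"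
  have nbN0: "nb b \<le> N0" if "b \<in> Bs" for b unfolding N0_def using Bs(1) that by (intro Max_ge) auto
  from spu[OF ep0] obtain N where N: "\<And>n. n \<ge> N \<Longrightarrow> \<exists>z\<in>compr_spectrum sm ip (V n) A. cmod (z - complex_of_real lam) < \<epsilon>"
    unfolding eventually_sequentially by blast
  define n where "n = max N N0"
  obtain z where z: "z \<in> compr_spectrum sm ip (V n) A" "cmod (z - complex_of_real lam) < \<epsilon>"
    using N[of n] unfolding n_def by auto
  from z(1) obtain v where v: "v \<in> V n" "v \<noteq> 0" "orthproj ip (V n) (A (orthproj ip (V n) v)) = sm z v"
    unfolding compr_spectrum_def by blast
  have Vn: "csubspace sm (V n)" "cfin_dim sm (V n)" "V n \<subseteq> D" using V by auto
  have ubV: "ub b \<in> V n" if "b \<in> Bs" for b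
  proof -
    have "nb b \<le> n" using nbN0[OF that] unfolding n_def by simp
    thus ?thesis using Vmono ub that by blast
  qed
  have ubD: "ub b \<in> D" if "b \<in> Bs" for b using ubV[OF that] Vn(3) by blast
  have pv: "orthproj ip (V n) (A v) = sm z v" using v(3) orthproj_self[OF Vn(1) v(1)] by simp
  have orth: "ip (A v - sm z v) w = 0" if "w \<in> V n" for w
    using orthproj_fd[OF Vn(1,2), of "A v"] pv that by simp
  have vD: "v \<in> D" using v(1) Vn(3) by blast
  define a where "a b = ip v b" for b
  define e where "e = (\<Sum>b\<in>Bs. sm (a b) b)"
  define f where "f = v - e"
  have e_pr: "e = pr Bs v" unfolding e_def pr_def a_def by simp
  have eD: "e \<in> D" unfolding e_def
    by (rule csub_sum[OF Dsub, of Bs "\<lambda>b. sm (a b) b"]) (use csub_sm[OF Dsub] Bs(3) in blast)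
  have fD: "f \<in> D" unfolding f_def using csub_diff[OF Dsub vD eD] .
  have fo: "\<forall>b\<in>Bs. ip f b = 0" unfolding f_def e_pr using pr_orth[OF Bs(2,1)] by blast
  have ecs: "e \<in> cspan Bs" unfolding e_pr by (rule pr_in)
  have ipfe: "ip f e = 0" using orth_cspan[OF fo ecs] .
  have ipef: "ip e f = 0" using ip_conj[of f e] ipfe by simp
  have vef: "v = e + f" unfolding f_def by simp
  have nv: "(norm v)\<^sup>2 = (norm e)\<^sup>2 + (norm f)\<^sup>2" using norm_add_sq[of e f] ipef vef by simp
  have ne: "(norm e)\<^sup>2 = (\<Sum>b\<in>Bs. (cmod (a b))\<^sup>2)" unfolding e_def by (rule norm_ons_sum[OF Bs(2,1)])
  have abnd: "cmod (a b) \<le> norm v" if "b \<in> Bs" for b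
  proof -
    have "ip b b = 1" using Bs(2) that unfolding ons_def by blast
    hence "Re (ip b b) = 1" by simp
    moreover have "Re (ip b b) = (norm b)\<^sup>2" by (simp only: ip_self Re_complex_of_real)
    ultimately have "(norm b)\<^sup>2 = 1" by simp
    hence "norm b = 1 \<or> norm b = -1" by (simp add: power2_eq_1_iff)
    hence "norm b = 1" using norm_ge_zero[of b] by linarith
    thus ?thesis unfolding a_def using cauchy_schwarz[of v b] by simp
  qed
  have B0e: "B0 e = (\<Sum>b\<in>Bs. sm (a b * complex_of_real (c b)) b)"
  proof -
    have "A e = (\<Sum>b\<in>Bs. A (sm (a b) b))" unfolding e_def
      by (rule A_sum) (use Bs(3) csub_sm[OF Dsub] in blast)
    also have "\<dots> = (\<Sum>b\<in>Bs. sm (a b) (A b))" using Bs(3) A_sm by (intro sum.cong) auto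
    finally have "B0 e = (\<Sum>b\<in>Bs. sm (a b) (A b)) - (\<Sum>b\<in>Bs. sm (a b) (lam *\<^sub>R b))"
      unfolding B0_def e_def by (simp add: scaleR_sum_right sm_scaleR_comm)
    also have "\<dots> = (\<Sum>b\<in>Bs. sm (a b) (A b - lam *\<^sub>R b))" by (simp add: sm_diff_right sum_subtractf)
    also have "\<dots> = (\<Sum>b\<in>Bs. sm (a b * complex_of_real (c b)) b)"
      using eig by (intro sum.cong) (simp_all add: sm_mult sm_real)
    finally show ?thesis .
  qed
  have B0ecs: "B0 e \<in> cspan Bs" unfolding B0e cspan_def
    by (intro CollectI exI[of _ "\<lambda>b. a b * complex_of_real (c b)"]) (rule refl)
  have c1: "ip (B0 e) f = 0" using orth_cspan[OF fo B0ecs] ip_conj[of f "B0 e"] by simp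
  have c2: "ip (B0 f) e = 0" using B0sym[OF fD eD] orth_cspan[OF fo B0ecs] by simp
  have qe: "\<sigma> * Re (ip (B0 e) e) \<le> - \<kappa> * (norm e)\<^sup>2"
  proof -
    have "ip (B0 e) e = (\<Sum>b\<in>Bs. (a b * complex_of_real (c b)) * cnj (a b))"
      unfolding B0e unfolding e_def by (rule ip_ons_sums[OF Bs(2,1)])
    also have "\<dots> = complex_of_real (\<Sum>b\<in>Bs. c b * (cmod (a b))\<^sup>2)"
      unfolding of_real_sum
    proof (intro sum.cong refl)
      fix b
      have "a b * cnj (a b) = complex_of_real ((cmod (a b))\<^sup>2)" by (simp only: complex_norm_square)
      thus "a b * complex_of_real (c b) * cnj (a b) = complex_of_real (c b * (cmod (a b))\<^sup>2)"
        by (simp only: of_real_mult) (simp add: algebra_simps)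
    qed
    finally have "\<sigma> * Re (ip (B0 e) e) = (\<Sum>b\<in>Bs. (\<sigma> * c b) * (cmod (a b))\<^sup>2)"
      by (simp add: sum_distrib_left mult.assoc)
    also have "\<dots> \<le> (\<Sum>b\<in>Bs. (- \<kappa>) * (cmod (a b))\<^sup>2)"
      using kap(2) by (intro sum_mono mult_right_mono) auto
    also have "\<dots> = - \<kappa> * (norm e)\<^sup>2" unfolding ne by (simp add: sum_distrib_left)
    finally show ?thesis .
  qed
  have qf': "\<kappa>' * (norm f)\<^sup>2 \<le> \<sigma> * Re (ip (B0 f) f)" unfolding B0_def by (rule kap'(2)[OF fD fo])
  have X: "ip (B0 v) (v - 2 *\<^sub>R e) = ip (B0 f) f - ip (B0 e) e"
  proof -
    have "v - 2 *\<^sub>R e = f - e" unfolding f_def by (simp add: scaleR_2)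
    moreover have "B0 v = B0 e + B0 f" unfolding vef by (rule B0add[OF eD fD])
    ultimately show ?thesis using c1 c2 by (simp add: ip_add_left ip_diff_right)
  qed
  have lowX: "\<kappa>0 * (norm v)\<^sup>2 \<le> \<sigma> * Re (ip (B0 v) (v - 2 *\<^sub>R e))"
  proof -
    have "\<kappa>0 * (norm v)\<^sup>2 = \<kappa>0 * (norm e)\<^sup>2 + \<kappa>0 * (norm f)\<^sup>2" unfolding nv by (simp add: algebra_simps)
    also have "\<dots> \<le> \<kappa> * (norm e)\<^sup>2 + \<kappa>' * (norm f)\<^sup>2" unfolding \<kappa>0_def
      by (intro add_mono mult_right_mono) auto
    also have "\<dots> \<le> \<sigma> * Re (ip (B0 f) f) - \<sigma> * Re (ip (B0 e) e)" using qe qf' by simp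
    also have "\<dots> = \<sigma> * Re (ip (B0 v) (v - 2 *\<^sub>R e))" unfolding X by (simp add: algebra_simps)
    finally show ?thesis .
  qed
  define e2 where "e2 = (\<Sum>b\<in>Bs. sm (a b) (ub b))"
  have e2V: "e2 \<in> V n" unfolding e2_def
    by (rule csub_sum[OF Vn(1), of Bs "\<lambda>b. sm (a b) (ub b)"]) (use csub_sm[OF Vn(1)] ubV in blast)
  have e2D: "e2 \<in> D" using e2V Vn(3) by blast
  have d1: "norm (e - e2) \<le> m * norm v * \<epsilon>"
  proof -
    have "e - e2 = (\<Sum>b\<in>Bs. sm (a b) (b - ub b))" unfolding e_def e2_def by (simp add: sm_diff_right sum_subtractf)
    hence "norm (e - e2) \<le> (\<Sum>b\<in>Bs. norm (sm (a b) (b - ub b)))" by (simp add: norm_sum)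
    also have "\<dots> \<le> (\<Sum>b\<in>Bs. norm v * \<epsilon>)"
    proof (rule sum_mono)
      fix b assume b: "b \<in> Bs"
      have "norm (b - ub b) \<le> \<epsilon>" using ub b by (meson add_le_cancel_left le_add_same_cancel1 less_imp_le norm_ge_zero order_trans)
      thus "norm (sm (a b) (b - ub b)) \<le> norm v * \<epsilon>" unfolding norm_sm using abnd[OF b]
        by (intro mult_mono) auto
    qed
    finally show ?thesis unfolding m_def by (simp add: ac_simps)
  qed
  have d2: "norm (A e - A e2) \<le> m * norm v * \<epsilon>"
  proof -
    have "A e = (\<Sum>b\<in>Bs. A (sm (a b) b))" unfolding e_def
      by (rule A_sum) (use Bs(3) csub_sm[OF Dsub] in blast)
    also have "\<dots> = (\<Sum>b\<in>Bs. sm (a b) (A b))" using Bs(3) A_sm by (intro sum.cong) auto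
    finally have "A e = (\<Sum>b\<in>Bs. sm (a b) (A b))" .
    moreover have "A e2 = (\<Sum>b\<in>Bs. A (sm (a b) (ub b)))" unfolding e2_def
      by (rule A_sum) (use ubD csub_sm[OF Dsub] in blast)
    moreover have "(\<Sum>b\<in>Bs. A (sm (a b) (ub b))) = (\<Sum>b\<in>Bs. sm (a b) (A (ub b)))"
      using ubD A_sm by (intro sum.cong) auto
    ultimately have "A e - A e2 = (\<Sum>b\<in>Bs. sm (a b) (A b - A (ub b)))" by (simp add: sm_diff_right sum_subtractf)
    hence "norm (A e - A e2) \<le> (\<Sum>b\<in>Bs. norm (sm (a b) (A b - A (ub b))))" by (simp add: norm_sum)
    also have "\<dots> \<le> (\<Sum>b\<in>Bs. norm v * \<epsilon>)"
    proof (rule sum_mono)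
      fix b assume b: "b \<in> Bs"
      have "norm (A b - A (ub b)) \<le> \<epsilon>" using ub b by (meson add_le_cancel_right le_add_same_cancel2 less_imp_le norm_ge_zero order_trans)
      thus "norm (sm (a b) (A b - A (ub b))) \<le> norm v * \<epsilon>" unfolding norm_sm using abnd[OF b]
        by (intro mult_mono) auto
    qed
    finally show ?thesis unfolding m_def by (simp add: ac_simps)
  qed
  have d3: "norm (B0 e - B0 e2) \<le> m * norm v * \<epsilon> * (1 + \<bar>lam\<bar>)"
  proof -
    have "B0 e - B0 e2 = (A e - A e2) - lam *\<^sub>R (e - e2)" unfolding B0_def by (simp add: algebra_simps)
    hence "norm (B0 e - B0 e2) \<le> norm (A e - A e2) + \<bar>lam\<bar> * norm (e - e2)"
      using norm_triangle_ineq4[of "A e - A e2" "lam *\<^sub>R (e - e2)"] by simp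
    also have "\<dots> \<le> m * norm v * \<epsilon> + \<bar>lam\<bar> * (m * norm v * \<epsilon>)"
      using d1 d2 by (intro add_mono mult_left_mono) auto
    finally show ?thesis by (simp add: algebra_simps)
  qed
  define w where "w = v - 2 *\<^sub>R e2"
  have wV: "w \<in> V n" unfolding w_def using csub_diff[OF Vn(1) v(1) csub_scaleR[OF Vn(1) e2V]] .
  have nw: "norm w \<le> norm v * (3 + 2 * m * \<epsilon>)"
  proof -
    have "norm e \<le> norm v" using nv by (simp add: power2_le_imp_le)
    have "norm e2 \<le> norm e + norm (e - e2)" using norm_triangle_ineq4[of e "e - e2"] by simp
    hence "norm e2 \<le> norm v + m * norm v * \<epsilon>" using d1 \<open>norm e \<le> norm v\<close> by simp
    moreover have "norm w \<le> norm v + 2 * norm e2" unfolding w_def using norm_triangle_ineq4[of v "2 *\<^sub>R e2"] by simp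
    ultimately show ?thesis by (simp add: algebra_simps)
  qed
  have "ip (A v - sm z v) w = 0" using orth[OF wV] .
  moreover have "A v - sm z v = B0 v - sm (z - complex_of_real lam) v"
    unfolding B0_def by (simp add: sm_diff_left sm_real)
  ultimately have "ip (B0 v) w = (z - complex_of_real lam) * ip v w"
    by (simp add: ip_diff_left ip_sm_left)
  moreover have "ip (B0 v) w = ip (B0 v) (v - 2 *\<^sub>R e) + 2 * ip v (B0 e - B0 e2)"
  proof -
    have "w = (v - 2 *\<^sub>R e) + 2 *\<^sub>R (e - e2)" unfolding w_def by (simp add: algebra_simps)
    hence "ip (B0 v) w = ip (B0 v) (v - 2 *\<^sub>R e) + 2 * ip (B0 v) (e - e2)"
      by (simp add: ip_add_right ip_scaleR_right)
    moreover have "ip (B0 v) (e - e2) = ip v (B0 (e - e2))" using B0sym[OF vD csub_diff[OF Dsub eD e2D]] .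
    moreover have "B0 (e - e2) = B0 e - B0 e2" by (rule B0diff[OF eD e2D])
    ultimately show ?thesis by simp
  qed
  ultimately have Xeq: "ip (B0 v) (v - 2 *\<^sub>R e) = (z - complex_of_real lam) * ip v w - 2 * ip v (B0 e - B0 e2)"
    by (simp add: algebra_simps)
  have "\<sigma> * Re (ip (B0 v) (v - 2 *\<^sub>R e)) \<le> cmod (ip (B0 v) (v - 2 *\<^sub>R e))"
  proof -
    have "\<sigma> * Re (ip (B0 v) (v - 2 *\<^sub>R e)) \<le> \<bar>\<sigma> * Re (ip (B0 v) (v - 2 *\<^sub>R e))\<bar>" by simp
    also have "\<dots> = \<bar>Re (ip (B0 v) (v - 2 *\<^sub>R e))\<bar>" using sig by (simp add: abs_mult)
    also have "\<dots> \<le> cmod (ip (B0 v) (v - 2 *\<^sub>R e))" by (rule abs_Re_le_cmod)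
    finally show ?thesis .
  qed
  also have "\<dots> \<le> cmod ((z - complex_of_real lam) * ip v w) + cmod (2 * ip v (B0 e - B0 e2))"
    unfolding Xeq by (rule norm_triangle_ineq4)
  also have "cmod ((z - complex_of_real lam) * ip v w) \<le> \<epsilon> * (norm v * (norm v * (3 + 2 * m * \<epsilon>)))"
  proof -
    have "cmod ((z - complex_of_real lam) * ip v w) = cmod (z - complex_of_real lam) * cmod (ip v w)" by (simp add: norm_mult)
    also have "\<dots> \<le> \<epsilon> * (norm v * norm w)" using z(2) cauchy_schwarz[of v w] ep0
      by (intro mult_mono) auto
    also have "\<dots> \<le> \<epsilon> * (norm v * (norm v * (3 + 2 * m * \<epsilon>)))" using nw ep0
      by (intro mult_left_mono) auto
    finally show ?thesis .
  qed
  also have "cmod (2 * ip v (B0 e - B0 e2)) \<le> 2 * (norm v * (m * norm v * \<epsilon> * (1 + \<bar>lam\<bar>)))"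
  proof -
    have "cmod (2 * ip v (B0 e - B0 e2)) = 2 * cmod (ip v (B0 e - B0 e2))" by (simp add: norm_mult)
    also have "\<dots> \<le> 2 * (norm v * norm (B0 e - B0 e2))" using cauchy_schwarz by simp
    also have "\<dots> \<le> 2 * (norm v * (m * norm v * \<epsilon> * (1 + \<bar>lam\<bar>)))" using d3
      by (intro mult_left_mono) auto
    finally show ?thesis .
  qed
  finally have up: "\<kappa>0 * (norm v)\<^sup>2 \<le> (norm v)\<^sup>2 * (\<epsilon> * (3 + 2 * m * \<epsilon>) + 2 * m * \<epsilon> * (1 + \<bar>lam\<bar>))"
    using lowX by (simp add: algebra_simps power2_eq_square)
  have "\<epsilon> * (3 + 2 * m * \<epsilon>) + 2 * m * \<epsilon> * (1 + \<bar>lam\<bar>) \<le> \<epsilon> * K"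
  proof -
    have "m * \<epsilon> \<le> m" using ep1 m0 by (simp add: mult_left_le)
    thus ?thesis unfolding K_def using ep0 by (simp add: algebra_simps mult_left_mono)
  qed
  hence "\<kappa>0 * (norm v)\<^sup>2 \<le> (norm v)\<^sup>2 * (\<epsilon> * K)" using up
    by (meson mult_left_mono order_trans zero_le_power2)
  moreover have "(norm v)\<^sup>2 > 0" using v(2) by simp
  ultimately have "\<kappa>0 \<le> \<epsilon> * K" by (simp add: mult.commute)
  thus False using epK by simp
qed

end


context hilop begin

lemma nonspec: assumes "complex_of_real r \<notin> op_spectrum sm D A"
  shows "bij_betw (\<lambda>x. A x - r *\<^sub>R x) D UNIV" "\<exists>C>0. \<forall>x\<in>D. norm x \<le> C * norm (A x - r *\<^sub>R x)"
proof -
  have "bij_betw (\<lambda>x. A x - sm (complex_of_real r) x) D UNIV \<and>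
      (\<exists>C. \<forall>x\<in>D. norm x \<le> C * norm (A x - sm (complex_of_real r) x))" using assms unfolding op_spectrum_def by simp
  hence h: "bij_betw (\<lambda>x. A x - r *\<^sub>R x) D UNIV \<and> (\<exists>C. \<forall>x\<in>D. norm x \<le> C * norm (A x - r *\<^sub>R x))"
    by (simp add: sm_real)
  show "bij_betw (\<lambda>x. A x - r *\<^sub>R x) D UNIV" using h by blast
  obtain C where C: "\<forall>x\<in>D. norm x \<le> C * norm (A x - r *\<^sub>R x)" using h by blast
  have "\<forall>x\<in>D. norm x \<le> max C 1 * norm (A x - r *\<^sub>R x)"
    using C by (meson max.cobounded1 mult_right_mono norm_ge_zero order_trans)
  thus "\<exists>C>0. \<forall>x\<in>D. norm x \<le> C * norm (A x - r *\<^sub>R x)" by (intro exI[of _ "max C 1"]) auto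
qed

definition res :: "real \<Rightarrow> 'a \<Rightarrow> 'a" where
  "res r = inv_into D (\<lambda>x. A x - r *\<^sub>R x)"

lemma res_props:
  assumes ns: "complex_of_real r \<notin> op_spectrum sm D A"
  shows "res r y \<in> D" "A (res r y) - r *\<^sub>R res r y = y"
    "x \<in> D \<Longrightarrow> res r (A x - r *\<^sub>R x) = x" "bop (res r)"
proof -
  have bij: "bij_betw (\<lambda>x. A x - r *\<^sub>R x) D UNIV" using nonspec(1)[OF ns] .
  obtain C where C: "C > 0" "\<forall>x\<in>D. norm x \<le> C * norm (A x - r *\<^sub>R x)" using nonspec(2)[OF ns] by blast
  define f where "f = (\<lambda>x. A x - r *\<^sub>R x)"
  define g where "g = res r"
  have gD: "g y \<in> D" for y unfolding g_def res_def
    using bij by (metis bij_betw_def inv_into_into UNIV_I)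
  have fg: "f (g y) = y" for y unfolding g_def res_def f_def
    using bij_betw_inv_into_right[OF bij] by simp
  have gf: "x \<in> D \<Longrightarrow> g (f x) = x" for x unfolding g_def res_def f_def
    using bij_betw_inv_into_left[OF bij] by simp
  show "res r y \<in> D" using gD unfolding g_def .
  show "A (res r y) - r *\<^sub>R res r y = y" using fg unfolding f_def g_def .
  show "x \<in> D \<Longrightarrow> res r (A x - r *\<^sub>R x) = x" using gf unfolding f_def g_def by simp
  have fadd: "f (u + v) = f u + f v" if "u \<in> D" "v \<in> D" for u v
    unfolding f_def using A_add[OF that] by (simp add: algebra_simps)
  have fsm: "f (sm a u) = sm a (f u)" if "u \<in> D" for a u
    unfolding f_def using A_sm[OF that] by (simp add: sm_diff_right sm_scaleR_comm)
  have fsym: "ip (f u) v = ip u (f v)" if "u \<in> D" "v \<in> D" for u v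
    unfolding f_def using Asym[OF that] by (simp add: ip_diff_left ip_diff_right ip_scaleR_left ip_scaleR_right)
  show "bop (res r)" unfolding g_def[symmetric] bop_def
  proof (intro conjI allI exI)
    fix x y
    have "g x + g y \<in> D" using csub_add[OF Dsub gD gD] .
    hence "g (f (g x + g y)) = g x + g y" by (rule gf)
    thus "g (x + y) = g x + g y" using fadd[OF gD gD] fg by simp
  next
    fix a x
    have "sm a (g x) \<in> D" using csub_sm[OF Dsub gD] .
    hence "g (f (sm a (g x))) = sm a (g x)" by (rule gf)
    thus "g (sm a x) = sm a (g x)" using fsm[OF gD] fg by simp
  next
    fix x show "norm (g x) \<le> C * norm x" using C(2) gD fg unfolding f_def by metis
  next
    fix x y
    have "ip (g x) y = ip (g x) (f (g y))" using fg by simp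
    also have "\<dots> = ip (f (g x)) (g y)" using fsym[OF gD gD] by simp
    finally show "ip (g x) y = ip x (g y)" using fg by simp
  qed
qed

lemma res_bounded_below:
  assumes ns: "complex_of_real lam \<notin> op_spectrum sm D A" and mu: "\<mu> \<noteq> 0"
    and ns2: "complex_of_real (lam + 1 / \<mu>) \<notin> op_spectrum sm D A"
  shows "\<exists>C>0. \<forall>x. norm x \<le> C * norm (res lam x - \<mu> *\<^sub>R x)"
proof -
  define s where "s = lam + 1 / \<mu>"
  obtain Cs where Cs: "Cs > 0" "\<forall>x\<in>D. norm x \<le> Cs * norm (A x - s *\<^sub>R x)"
    using nonspec(2)[OF ns2] unfolding s_def by blast
  define T where "T = res lam"
  have TD: "T x \<in> D" for x unfolding T_def using res_props(1)[OF ns] .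
  have TA: "A (T x) - lam *\<^sub>R T x = x" for x unfolding T_def using res_props(2)[OF ns] .
  define m where "m = \<bar>\<mu>\<bar>"
  have m0: "m > 0" unfolding m_def using mu by simp
  have "norm x \<le> ((Cs / m + 1) / m) * norm (T x - \<mu> *\<^sub>R x)" for x
  proof -
    have "A (T x) - s *\<^sub>R T x = - ((1 / \<mu>) *\<^sub>R (T x - \<mu> *\<^sub>R x))"
      using TA[of x] mu unfolding s_def by (simp add: algebra_simps)
    hence "norm (A (T x) - s *\<^sub>R T x) = norm (T x - \<mu> *\<^sub>R x) / m" unfolding m_def
      by (simp add: divide_inverse mult.commute)
    hence nT: "norm (T x) \<le> Cs * (norm (T x - \<mu> *\<^sub>R x) / m)" using Cs(2) TD[of x] by metis
    have "\<mu> *\<^sub>R x = T x - (T x - \<mu> *\<^sub>R x)" by simp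
    hence "m * norm x \<le> norm (T x) + norm (T x - \<mu> *\<^sub>R x)" unfolding m_def
      using norm_triangle_ineq4[of "T x" "T x - \<mu> *\<^sub>R x"] by (metis norm_scaleR)
    also have "\<dots> \<le> (Cs / m + 1) * norm (T x - \<mu> *\<^sub>R x)" using nT by (simp add: algebra_simps)
    finally have "m * norm x \<le> (Cs / m + 1) * norm (T x - \<mu> *\<^sub>R x)" .
    thus ?thesis using m0 by (simp add: field_simps)
  qed
  moreover have "(Cs / m + 1) / m > 0" by (intro divide_pos_pos add_pos_pos) (use Cs m0 in auto)
  ultimately show ?thesis unfolding T_def by blast
qed

lemma res_not_appr:
  assumes ns: "complex_of_real lam \<notin> op_spectrum sm D A" and mu: "\<mu> \<noteq> 0"
    and ns2: "complex_of_real (lam + 1 / \<mu>) \<notin> op_spectrum sm D A"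
  shows "\<not> apprU U (res lam) \<mu>"
  using res_bounded_below[OF assms] not_appr by blast

lemma res_invb:
  assumes ns: "complex_of_real lam \<notin> op_spectrum sm D A" and mu: "\<mu> \<noteq> 0"
    and ns2: "complex_of_real (lam + 1 / \<mu>) \<notin> op_spectrum sm D A"
  shows "invb (\<lambda>x. res lam x - \<mu> *\<^sub>R x)"
proof -
  define s where "s = lam + 1 / \<mu>"
  define T where "T = res lam"
  have Tb: "bop T" unfolding T_def by (rule res_props(4)[OF ns])
  obtain C where C: "C > 0" "\<forall>x. norm x \<le> C * norm (T x - \<mu> *\<^sub>R x)"
    using res_bounded_below[OF assms] unfolding T_def by blast
  have inj: "inj (\<lambda>x. T x - \<mu> *\<^sub>R x)"
  proof (rule injI)
    fix x y assume "T x - \<mu> *\<^sub>R x = T y - \<mu> *\<^sub>R y"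
    moreover have "T (x - y) - \<mu> *\<^sub>R (x - y) = (T x - \<mu> *\<^sub>R x) - (T y - \<mu> *\<^sub>R y)"
      by (simp add: bop_diff[OF Tb] algebra_simps)
    ultimately have "T (x - y) - \<mu> *\<^sub>R (x - y) = 0" by simp
    hence "norm (x - y) \<le> 0" using C(2)[rule_format, of "x - y"] by simp
    thus "x = y" by simp
  qed
  have surj: "surj (\<lambda>x. T x - \<mu> *\<^sub>R x)"
  proof (rule surjI)
    fix y
    define u where "u = res s (- ((1 / \<mu>) *\<^sub>R y))"
    have uD: "u \<in> D" unfolding u_def using res_props(1)[OF ns2[folded s_def]] .
    have Au: "A u - s *\<^sub>R u = - ((1 / \<mu>) *\<^sub>R y)" unfolding u_def using res_props(2)[OF ns2[folded s_def]] .
    define x where "x = A u - lam *\<^sub>R u"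
    have Tx: "T x = u" unfolding T_def x_def using res_props(3)[OF ns uD] .
    have "x = A u - s *\<^sub>R u + (s - lam) *\<^sub>R u" unfolding x_def by (simp add: algebra_simps)
    hence "x = - ((1 / \<mu>) *\<^sub>R y) + (s - lam) *\<^sub>R u" using Au by simp
    hence "x = - ((1 / \<mu>) *\<^sub>R y) + (1 / \<mu>) *\<^sub>R u" unfolding s_def by simp
    hence "\<mu> *\<^sub>R x = - y + u" using mu by (simp add: scaleR_add_right scaleR_diff_right)
    thus "T x - \<mu> *\<^sub>R x = y" unfolding Tx by simp
  qed
  show ?thesis unfolding invb_def T_def[symmetric] using inj surj C(2) by (auto simp: bij_def)
qed

lemma res_eig:
  assumes ns: "complex_of_real lam \<notin> op_spectrum sm D A" and w: "w \<noteq> 0"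
  shows "res lam x = w *\<^sub>R x \<longleftrightarrow> x \<in> D \<and> A x = (lam + 1 / w) *\<^sub>R x"
proof
  assume Tx: "res lam x = w *\<^sub>R x"
  have "x = (1 / w) *\<^sub>R res lam x" using Tx w by simp
  hence xD: "x \<in> D" using csub_scaleR[OF Dsub res_props(1)[OF ns]] by metis
  have "A (res lam x) - lam *\<^sub>R res lam x = x" by (rule res_props(2)[OF ns])
  hence "A (w *\<^sub>R x) - lam *\<^sub>R (w *\<^sub>R x) = x" unfolding Tx .
  hence "w *\<^sub>R (A x - lam *\<^sub>R x) = x" using A_scaleR[OF xD] by (simp add: algebra_simps)
  hence "A x - lam *\<^sub>R x = (1 / w) *\<^sub>R x" using w by (metis (no_types, lifting) divideR_right
        scaleR_scaleR divide_inverse_commute divide_self_if mult.left_neutral scaleR_one)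
  hence "A x = (lam + 1 / w) *\<^sub>R x" by (simp add: algebra_simps)
  thus "x \<in> D \<and> A x = (lam + 1 / w) *\<^sub>R x" using xD by simp
next
  assume a: "x \<in> D \<and> A x = (lam + 1 / w) *\<^sub>R x"
  have "A x - lam *\<^sub>R x = (1 / w) *\<^sub>R x" using a by (simp add: algebra_simps)
  hence "res lam ((1 / w) *\<^sub>R x) = x" using res_props(3)[OF ns, of x] a by simp
  hence "(1 / w) *\<^sub>R res lam x = x" using bop_scaleR[OF res_props(4)[OF ns]] by simp
  thus "res lam x = w *\<^sub>R x" using w by (metis (no_types, lifting) scaleR_scaleR divide_self_if
        divide_inverse_commute mult.commute scaleR_one nonzero_mult_div_cancel_left)
qed

end


context hilop begin

lemma invb_scale: assumes "invb f" "c \<noteq> 0" shows "invb (\<lambda>x. c *\<^sub>R f x)"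
proof -
  obtain C where C: "C > 0" "\<And>x. norm x \<le> C * norm (f x)" using invb_pos[OF assms(1)] by blast
  have bf: "bij f" using assms(1) unfolding invb_def by blast
  have "bij (\<lambda>x. c *\<^sub>R f x)"
  proof (rule bijI)
    show "inj (\<lambda>x. c *\<^sub>R f x)"
    proof (rule injI)
      fix x y assume "c *\<^sub>R f x = c *\<^sub>R f y"
      hence "f x = f y" using assms(2) by simp
      thus "x = y" using bf by (simp add: bij_is_inj inj_eq)
    qed
    show "surj (\<lambda>x. c *\<^sub>R f x)"
    proof (rule surjI)
      fix y show "c *\<^sub>R f (inv f ((1 / c) *\<^sub>R y)) = y"
        using bf assms(2) by (simp add: bij_is_surj surj_f_inv_f)
    qed
  qed
  moreover have "norm x \<le> (C / \<bar>c\<bar>) * norm (c *\<^sub>R f x)" for x using C(2)[of x] assms(2) by simp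
  ultimately show ?thesis unfolding invb_def by blast
qed

lemma generic_side:
  fixes lam \<sigma> :: real and R :: "real set"
  assumes ns: "complex_of_real lam \<notin> op_spectrum sm D A"
    and sig: "\<sigma> = 1 \<or> \<sigma> = -1"
    and Rfin: "finite R"
    and Rsub: "\<And>r. r \<in> R \<Longrightarrow> \<sigma> * (r - lam) < 0"
    and Rall: "\<And>r. complex_of_real r \<in> op_spectrum sm D A \<Longrightarrow> \<sigma> * (r - lam) < 0 \<Longrightarrow> r \<in> R"
    and Rfd: "\<And>r. r \<in> R \<Longrightarrow> cfin_dim sm {x\<in>D. A x = sm (complex_of_real r) x}"
    and spur: "lam \<in> spurious sm ip D A"
  shows False
proof -
  have s2: "\<sigma> * \<sigma> = 1" using sig by auto
  have s0: "\<sigma> \<noteq> 0" using sig by auto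
  define T where "T = res lam"
  have Tb: "bop T" unfolding T_def by (rule res_props(4)[OF ns])
  define Ts where "Ts = (\<lambda>x. \<sigma> *\<^sub>R T x)"
  have Tsb: "bop Ts"
  proof (cases "\<sigma> = 1")
    case True thus ?thesis unfolding Ts_def using Tb by simp
  next
    case False hence "\<sigma> = -1" using sig by simp
    thus ?thesis unfolding Ts_def using bop_neg[OF Tb] by simp
  qed
  have Ts_eig: "Ts x = w *\<^sub>R x \<longleftrightarrow> T x = (\<sigma> * w) *\<^sub>R x" for x w
  proof
    assume "Ts x = w *\<^sub>R x"
    hence "\<sigma> *\<^sub>R (\<sigma> *\<^sub>R T x) = \<sigma> *\<^sub>R (w *\<^sub>R x)" unfolding Ts_def by simp
    thus "T x = (\<sigma> * w) *\<^sub>R x" using s2 by (simp add: mult.assoc[symmetric])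
  next
    assume "T x = (\<sigma> * w) *\<^sub>R x"
    thus "Ts x = w *\<^sub>R x" unfolding Ts_def using s2 by (simp add: mult.assoc[symmetric])
  qed
  define N where "N = (\<lambda>r. \<sigma> / (r - lam)) ` R"
  have Nfin: "finite N" unfolding N_def using Rfin by simp
  have sgn: "\<sigma> / (r - lam) < 0 \<longleftrightarrow> \<sigma> * (r - lam) < 0" for r
    using sig by (auto simp: divide_less_0_iff mult_less_0_iff)
  have Nneg: "\<forall>w\<in>N. w < 0" unfolding N_def using Rsub sgn by blast
  have gd: "invb (\<lambda>x. Ts x - w *\<^sub>R x)" if w: "w < 0" "w \<notin> N" for w
  proof -
    define \<mu> where "\<mu> = \<sigma> * w"
    have mu0: "\<mu> \<noteq> 0" unfolding \<mu>_def using w s0 by simp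
    define r where "r = lam + 1 / \<mu>"
    have "\<sigma> * (r - lam) = 1 / w" unfolding r_def \<mu>_def using s2 s0 w
      by (simp add: field_simps)
    hence side: "\<sigma> * (r - lam) < 0" using w by simp
    have "complex_of_real r \<notin> op_spectrum sm D A"
    proof
      assume "complex_of_real r \<in> op_spectrum sm D A"
      hence "r \<in> R" using Rall side by blast
      moreover have "\<sigma> / (r - lam) = w" unfolding r_def \<mu>_def using s2 mu0 \<mu>_def
        by (simp add: field_simps)
      ultimately have "w \<in> N" unfolding N_def by force
      thus False using w by simp
    qed
    hence "invb (\<lambda>x. T x - \<mu> *\<^sub>R x)" unfolding T_def using res_invb[OF ns mu0] r_def by simp
    hence "invb (\<lambda>x. \<sigma> *\<^sub>R (T x - \<mu> *\<^sub>R x))" using invb_scale s0 by blast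
    moreover have "(\<lambda>x. \<sigma> *\<^sub>R (T x - \<mu> *\<^sub>R x)) = (\<lambda>x. Ts x - w *\<^sub>R x)"
      unfolding Ts_def \<mu>_def using s2 by (simp add: scaleR_diff_right mult.assoc[symmetric])
    ultimately show ?thesis by simp
  qed
  have fd: "cfin_dim sm {x. Ts x = w *\<^sub>R x}" if wN: "w \<in> N" for w
  proof -
    obtain r where r: "r \<in> R" "w = \<sigma> / (r - lam)" using wN unfolding N_def by blast
    have rl: "r - lam \<noteq> 0" using Rsub[OF r(1)] by auto
    have sw: "\<sigma> * w = 1 / (r - lam)" using r(2) s2 by (simp add: mult.assoc[symmetric])
    have sw0: "\<sigma> * w \<noteq> 0" using sw rl by simp
    have "{x. Ts x = w *\<^sub>R x} = {x\<in>D. A x = sm (complex_of_real r) x}"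
    proof -
      have lr: "lam + 1 / (\<sigma> * w) = r" using sw rl by simp
      have "Ts x = w *\<^sub>R x \<longleftrightarrow> x \<in> D \<and> A x = (lam + 1 / (\<sigma> * w)) *\<^sub>R x" for x
        unfolding Ts_eig T_def by (rule res_eig[OF ns sw0])
      hence "Ts x = w *\<^sub>R x \<longleftrightarrow> x \<in> D \<and> A x = sm (complex_of_real r) x" for x
        unfolding lr by (simp add: sm_real)
      thus ?thesis by blast
    qed
    thus ?thesis using Rfd[OF r(1)] by simp
  qed
  obtain Bs where Bs: "finite Bs" "ons Bs" "\<forall>b\<in>Bs. \<exists>w\<in>N. Ts b = w *\<^sub>R b"
    "\<forall>x. (\<forall>b\<in>Bs. ip x b = 0) \<longrightarrow> qf Ts x \<ge> 0"
    using core_bounded[OF Tsb Nfin Nneg gd fd] by blast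
  have beig: "\<exists>r\<in>R. b \<in> D \<and> A b = r *\<^sub>R b" if b: "b \<in> Bs" for b
  proof -
    obtain w where w: "w \<in> N" "Ts b = w *\<^sub>R b" using Bs(3) b by blast
    obtain r where r: "r \<in> R" "w = \<sigma> / (r - lam)" using w(1) unfolding N_def by blast
    have rl: "r - lam \<noteq> 0" using Rsub[OF r(1)] by auto
    have sw: "\<sigma> * w = 1 / (r - lam)" using r(2) s2 by (simp add: mult.assoc[symmetric])
    have sw0: "\<sigma> * w \<noteq> 0" using sw rl by simp
    have "b \<in> D \<and> A b = (lam + 1 / (\<sigma> * w)) *\<^sub>R b" using w(2) unfolding Ts_eig T_def res_eig[OF ns sw0] .
    thus ?thesis using r(1) sw rl by auto
  qed
  define rb where "rb b = (SOME r. r \<in> R \<and> b \<in> D \<and> A b = r *\<^sub>R b)" for b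
  have rb: "rb b \<in> R \<and> b \<in> D \<and> A b = rb b *\<^sub>R b" if "b \<in> Bs" for b
    unfolding rb_def using someI_ex[OF beig[OF that, unfolded Bex_def]] .
  define c where "c b = rb b - lam" for b
  have BsD: "Bs \<subseteq> D" using rb by blast
  have ceig: "A b - lam *\<^sub>R b = c b *\<^sub>R b" if "b \<in> Bs" for b
    unfolding c_def using rb[OF that] by (simp add: algebra_simps)
  define \<kappa> where "\<kappa> = Min (insert 1 ((\<lambda>r. - (\<sigma> * (r - lam))) ` R))"
  have kap0: "\<kappa> > 0" unfolding \<kappa>_def using Rfin Rsub by auto
  have kapb: "\<sigma> * c b \<le> - \<kappa>" if "b \<in> Bs" for b
  proof -
    have "\<kappa> \<le> - (\<sigma> * (rb b - lam))" unfolding \<kappa>_def using Rfin rb[OF that] by (intro Min_le) auto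
    thus ?thesis unfolding c_def by simp
  qed
  obtain CT where CT: "CT > 0" "\<And>x. norm (Ts x) \<le> CT * norm x" using bop_bound[OF Tsb] by blast
  define U where "U = {y. \<forall>b\<in>Bs. ip y b = 0}"
  have Uc: "csubspace sm U" unfolding U_def csubspace_def by (auto simp: ip_add_left ip_sm_left)
  have TU: "Ts y \<in> U" if "y \<in> U" for y
  proof -
    have "ip (Ts y) b = 0" if b: "b \<in> Bs" for b
    proof -
      obtain w where "w \<in> N" "Ts b = w *\<^sub>R b" using Bs(3) b by blast
      hence "ip (Ts y) b = complex_of_real w * ip y b" using bop_sym[OF Tsb, of y b] by (simp add: ip_scaleR_right)
      thus ?thesis using \<open>y \<in> U\<close> b unfolding U_def by simp
    qed
    thus ?thesis unfolding U_def by blast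
  qed
  have Upos: "qf Ts y \<ge> 0" if "y \<in> U" for y using Bs(4) that unfolding U_def by blast
  define \<kappa>' where "\<kappa>' = 1 / CT"
  have kap'0: "\<kappa>' > 0" unfolding \<kappa>'_def using CT by simp
  have kap'b: "\<kappa>' * (norm f)\<^sup>2 \<le> \<sigma> * Re (ip (A f - lam *\<^sub>R f) f)"
    if f: "f \<in> D" "\<forall>b\<in>Bs. ip f b = 0" for f
  proof -
    define g where "g = A f - lam *\<^sub>R f"
    have Tg: "T g = f" unfolding g_def T_def using res_props(3)[OF ns f(1)] .
    have gU: "g \<in> U" unfolding U_def
    proof (intro CollectI ballI)
      fix b assume b: "b \<in> Bs"
      have bD: "b \<in> D" using BsD b by blast
      have "ip g b = ip f (A b - lam *\<^sub>R b)" unfolding g_def using Asym[OF f(1) bD]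
        by (simp add: ip_diff_left ip_diff_right ip_scaleR_left ip_scaleR_right)
      also have "\<dots> = complex_of_real (c b) * ip f b" using ceig[OF b] by (simp add: ip_scaleR_right)
      finally show "ip g b = 0" using f(2) b by simp
    qed
    have "(norm (Ts g))\<^sup>2 \<le> CT * qf Ts g" by (rule pos_cs[OF Tsb Uc TU Upos CT gU])
    moreover have "norm (Ts g) = norm f" unfolding Ts_def Tg using sig by auto
    moreover have "qf Ts g = \<sigma> * Re (ip g f)"
    proof -
      have "qf Ts g = \<sigma> * Re (ip f g)" unfolding qf_def Ts_def Tg by (simp add: ip_scaleR_left)
      also have "Re (ip f g) = Re (ip g f)" using ip_conj[of g f] by simp
      finally show ?thesis .
    qed
    ultimately have "(norm f)\<^sup>2 \<le> CT * (\<sigma> * Re (ip g f))" by simp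
    thus ?thesis unfolding \<kappa>'_def g_def using CT by (simp add: field_simps)
  qed
  obtain V where V: "\<forall>n. csubspace sm (V n) \<and> cfin_dim sm (V n) \<and> V n \<subseteq> D \<and> V n \<subseteq> V (Suc n)"
    and dense: "\<forall>x\<in>D. \<forall>e>0. \<exists>n. \<exists>v\<in>V n. norm (x - v) + norm (A x - A v) < e"
    and spu: "\<forall>e>0. \<forall>\<^sub>F n in sequentially. \<exists>z\<in>compr_spectrum sm ip (V n) A. cmod (z - complex_of_real lam) < e"
    using spur unfolding spurious_def by blast
  show False
    by (rule final_abstract[of \<sigma> Bs lam c \<kappa> \<kappa>' V])
      (use sig Bs(1,2) BsD ceig kap0 kapb kap'0 kap'b V dense spu in auto)
qed

end


context hilop begin

lemma noness: assumes "z \<in> op_spectrum sm D A" "z \<notin> ess_spectrum sm D A"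
  shows "\<exists>e>0. \<forall>w\<in>op_spectrum sm D A. w \<noteq> z \<longrightarrow> e \<le> cmod (w - z)"
    "\<exists>x\<in>D. x \<noteq> 0 \<and> A x = sm z x" "cfin_dim sm {x\<in>D. A x = sm z x}"
  using assms unfolding ess_spectrum_def by blast+

lemma finite_R:
  fixes R :: "real set" and a b :: real
  assumes Rsp: "\<And>r. r \<in> R \<Longrightarrow> complex_of_real r \<in> op_spectrum sm D A"
    and Rab: "R \<subseteq> {a..b}"
    and Rne: "\<And>r. r \<in> R \<Longrightarrow> complex_of_real r \<notin> ess_spectrum sm D A"
    and lim: "\<And>x. x islimpt R \<Longrightarrow> complex_of_real x \<in> op_spectrum sm D A \<Longrightarrow> x \<in> R"
  shows "finite R"
proof -
  have nl: "\<not> x islimpt R" for x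
  proof
    assume xl: "x islimpt R"
    show False
    proof (cases "complex_of_real x \<in> op_spectrum sm D A")
      case True
      hence xR: "x \<in> R" using lim xl by blast
      obtain e where e: "e > 0" "\<forall>w\<in>op_spectrum sm D A. w \<noteq> complex_of_real x \<longrightarrow> e \<le> cmod (w - complex_of_real x)"
        using noness(1)[OF True Rne[OF xR]] by blast
      obtain r where r: "r \<in> R" "r \<noteq> x" "dist r x < e" using xl e(1) unfolding islimpt_approachable by blast
      have "e \<le> cmod (complex_of_real r - complex_of_real x)" using e(2) Rsp[OF r(1)] r(2) by simp
      also have "\<dots> = dist r x" unfolding of_real_diff[symmetric] norm_of_real dist_real_def ..
      finally show False using r(3) by simp
    next
      case False
      obtain C where C: "C > 0" "\<forall>u\<in>D. norm u \<le> C * norm (A u - x *\<^sub>R u)" using nonspec(2)[OF False] by blast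
      have "1 / C > 0" using C by simp
      then obtain r where r: "r \<in> R" "r \<noteq> x" "dist r x < 1 / C" using xl unfolding islimpt_approachable by blast
      obtain u where u: "u \<in> D" "u \<noteq> 0" "A u = sm (complex_of_real r) u"
        using noness(2)[OF Rsp[OF r(1)] Rne[OF r(1)]] by blast
      have "A u - x *\<^sub>R u = (r - x) *\<^sub>R u" using u(3) by (simp add: sm_real algebra_simps)
      moreover have "norm u \<le> C * norm (A u - x *\<^sub>R u)" using C(2) u(1) by blast
      ultimately have "norm u \<le> C * (\<bar>r - x\<bar> * norm u)" by simp
      also have "\<dots> < C * ((1 / C) * norm u)" using r(3) u(2) C(1)
        by (intro mult_strict_left_mono mult_strict_right_mono) (auto simp: dist_real_def)
      also have "\<dots> = norm u" using C(1) by simp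
      finally show False by simp
    qed
  qed
  have "finite ({a..b} \<inter> R)" by (rule finite_not_islimpt_in_compact) (use nl in auto)
  moreover have "{a..b} \<inter> R = R" using Rab by blast
  ultimately show ?thesis by simp
qed

end

theorem mainTheorem3:
  fixes sm :: "complex \<Rightarrow> 'a::banach \<Rightarrow> 'a"
    and ip :: "'a \<Rightarrow> 'a \<Rightarrow> complex"
    and D :: "'a set"
    and A :: "'a \<Rightarrow> 'a"
    and lam :: real
  assumes "complex_hilbert sm ip"
    and "hseparable TYPE('a)"
    and "selfadjoint sm ip D A"
    and "lam \<in> spurious sm ip D A"
  shows "ereal lam \<in> ConvE (ess_hat sm D A)"
proof -
  interpret hilop sm ip D A
  proof
    show "complex_hilbert sm ip" by fact
    show "csubspace sm D" using assms(3) unfolding selfadjoint_def by blast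
    show "clinear_on sm D A" using assms(3) unfolding selfadjoint_def by blast
    show "\<And>x y. x \<in> D \<Longrightarrow> y \<in> D \<Longrightarrow> ip (A x) y = ip x (A y)" using assms(3) unfolding selfadjoint_def by blast
  qed
  have ns: "complex_of_real lam \<notin> op_spectrum sm D A" using assms(4) unfolding spurious_def by blast
  let ?S = "real_spectrum sm D A"
  have lowcase: False if low: "\<forall>a\<in>ess_hat sm D A. \<not> a \<le> ereal lam"
  proof -
    have bb: "bdd_below ?S"
    proof (rule ccontr)
      assume "\<not> bdd_below ?S"
      hence "-\<infinity> \<in> ess_hat sm D A" unfolding ess_hat_def by simp
      thus False using low by force
    qed
    then obtain a where a: "\<And>r. r \<in> ?S \<Longrightarrow> a \<le> r" unfolding bdd_below_def by blast
    have ne: "complex_of_real r \<notin> ess_spectrum sm D A" if "r \<le> lam" for r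
    proof
      assume "complex_of_real r \<in> ess_spectrum sm D A"
      hence "ereal r \<in> ess_hat sm D A" unfolding ess_hat_def by blast
      thus False using low that by force
    qed
    define R where "R = {r. complex_of_real r \<in> op_spectrum sm D A \<and> r < lam}"
    have fR: "finite R"
    proof (rule finite_R[of R a lam])
      show "R \<subseteq> {a..lam}" unfolding R_def using a unfolding real_spectrum_def by auto
      show "\<And>r. r \<in> R \<Longrightarrow> complex_of_real r \<notin> ess_spectrum sm D A" unfolding R_def using ne by auto
      fix x assume xl: "x islimpt R" and xs: "complex_of_real x \<in> op_spectrum sm D A"
      have "R \<subseteq> {..lam}" unfolding R_def by auto
      hence "x islimpt {..lam}" using islimpt_subset[OF xl] by blast
      hence "x \<le> lam" using closed_limpt[of "{..lam}"] by auto
      moreover have "x \<noteq> lam" using xs ns by auto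
      ultimately show "x \<in> R" unfolding R_def using xs by simp
    qed (auto simp: R_def)
    show False
    proof (rule generic_side[OF ns _ fR _ _ _ assms(4), of 1])
      show "1 = 1 \<or> (1::real) = -1" by simp
      show "\<And>r. r \<in> R \<Longrightarrow> 1 * (r - lam) < 0" unfolding R_def by simp
      show "\<And>r. complex_of_real r \<in> op_spectrum sm D A \<Longrightarrow> 1 * (r - lam) < 0 \<Longrightarrow> r \<in> R"
        unfolding R_def by simp
      fix r assume "r \<in> R"
      hence "complex_of_real r \<in> op_spectrum sm D A" "complex_of_real r \<notin> ess_spectrum sm D A"
        unfolding R_def using ne by auto
      thus "cfin_dim sm {x\<in>D. A x = sm (complex_of_real r) x}" by (rule noness(3))
    qed
  qed
  have highcase: False if high: "\<forall>b\<in>ess_hat sm D A. \<not> ereal lam \<le> b"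
  proof -
    have bb: "bdd_above ?S"
    proof (rule ccontr)
      assume "\<not> bdd_above ?S"
      hence "\<infinity> \<in> ess_hat sm D A" unfolding ess_hat_def by simp
      thus False using high by force
    qed
    then obtain a where a: "\<And>r. r \<in> ?S \<Longrightarrow> r \<le> a" unfolding bdd_above_def by blast
    have ne: "complex_of_real r \<notin> ess_spectrum sm D A" if "lam \<le> r" for r
    proof
      assume "complex_of_real r \<in> ess_spectrum sm D A"
      hence "ereal r \<in> ess_hat sm D A" unfolding ess_hat_def by blast
      thus False using high that by force
    qed
    define R where "R = {r. complex_of_real r \<in> op_spectrum sm D A \<and> lam < r}"
    have fR: "finite R"
    proof (rule finite_R[of R lam a])
      show "R \<subseteq> {lam..a}" unfolding R_def using a unfolding real_spectrum_def by auto
      show "\<And>r. r \<in> R \<Longrightarrow> complex_of_real r \<notin> ess_spectrum sm D A" unfolding R_def using ne by auto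
      fix x assume xl: "x islimpt R" and xs: "complex_of_real x \<in> op_spectrum sm D A"
      have "R \<subseteq> {lam..}" unfolding R_def by auto
      hence "x islimpt {lam..}" using islimpt_subset[OF xl] by blast
      hence "lam \<le> x" using closed_limpt[of "{lam..}"] by auto
      moreover have "x \<noteq> lam" using xs ns by auto
      ultimately show "x \<in> R" unfolding R_def using xs by simp
    qed (auto simp: R_def)
    show False
    proof (rule generic_side[OF ns _ fR _ _ _ assms(4), of "-1"])
      show "-1 = 1 \<or> (-1::real) = -1" by simp
      show "\<And>r. r \<in> R \<Longrightarrow> -1 * (r - lam) < 0" unfolding R_def by simp
      show "\<And>r. complex_of_real r \<in> op_spectrum sm D A \<Longrightarrow> -1 * (r - lam) < 0 \<Longrightarrow> r \<in> R"
        unfolding R_def by simp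
      fix r assume "r \<in> R"
      hence "complex_of_real r \<in> op_spectrum sm D A" "complex_of_real r \<notin> ess_spectrum sm D A"
        unfolding R_def using ne by auto
      thus "cfin_dim sm {x\<in>D. A x = sm (complex_of_real r) x}" by (rule noness(3))
    qed
  qed
  show ?thesis
  proof (rule ccontr)
    assume "ereal lam \<notin> ConvE (ess_hat sm D A)"
    hence "(\<forall>a\<in>ess_hat sm D A. \<not> a \<le> ereal lam) \<or> (\<forall>b\<in>ess_hat sm D A. \<not> ereal lam \<le> b)"
      unfolding ConvE_def by blast
    thus False using lowcase highcase by blast
  qed
qed


end
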